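(* Let $(\mathfrak C,\Delta,\varepsilon)$ be an $A$-coring and $(M,\mathfrak m)$ a $\mathfrak C$-cowreath with structure maps $\xi:\mathfrak C\otimes M\to\mathfrak C$ and $\delta:\mathfrak C\otimes M\to\mathfrak C\otimes M\otimes M$. Then the $A$-bimodule $\mathfrak C\otimes M$ is an $A$-coring with comultiplication and counit $$\Delta'=(\mathfrak C\otimes\mathfrak m\otimes M)\circ(\mathfrak C\otimes\delta)\circ(\Delta\otimes M),\qquad \varepsilon'=\varepsilon\circ\xi.$$ Moreover, $\xi:\mathfrak C\otimes M\to\mathfrak C$ is a morphism of $A$-corings.
   Context: Fix a commutative ring $\mathbb K$; rings are associative unital $\mathbb K$-algebras, bimodules unital and $\mathbb K$-central. $A$ is a ring, $\otimes=\otimes_A$, canonical unit isomorphisms are suppressed, identity maps are denoted by the objects. An $A$-coring $(\mathfrak C,\Delta,\varepsilon)$ is an $A$-bimodule with $A$-bilinear $\Delta:\mathfrak C\to\mathfrak C\otimes\mathfrak C$, $\varepsilon:\mathfrak C\to A$, coassociative and counital; a morphism of $A$-corings $\phi:\mathfrak D\to\mathfrak C$ is an $A$-bilinear map with $\varepsilon_{\mathfrak C}\phi=\varepsilon_{\mathfrak D}$ and $(\phi\otimes\phi)\Delta_{\mathfrak D}=\Delta_{\mathfrak C}\phi$. The category $\mathscr R_{(\mathfrak C:A)}$ has objects $(M,\mathfrak m)$, $M$ an $A$-bimodule, $\mathfrak m:\mathfrak C\otimes M\to M\otimes\mathfrak C$ $A$-bilinear with $(M\otimes\Delta)\mathfrak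 m=(\mathfrak m\otimes\mathfrak C)(\mathfrak C\otimes\mathfrak m)(\Delta\otimes M)$ and $(M\otimes\varepsilon)\mathfrak m=\varepsilon\otimes M$; $\mathfrak C\otimes M$ is then a $\mathfrak C$-bicomodule with left coaction $\Delta\otimes M$ and right coaction $(\mathfrak C\otimes\mathfrak m)(\Delta\otimes M)$. A $\mathfrak C$-cowreath is an object $(M,\mathfrak m)$ with $\mathfrak C$-bicolinear maps $\xi:\mathfrak C\otimes M\to\mathfrak C$, $\delta:\mathfrak C\otimes M\to\mathfrak C\otimes M\otimes M$ (the latter bicomodule with left coaction $\Delta\otimes M\otimes M$ and right coaction $(\mathfrak C\otimes M\otimes\mathfrak m)(\mathfrak C\otimes\mathfrak m\otimes M)(\Delta\otimes M\otimes M)$) such that $(\xi\otimes M)\delta=\mathfrak C\otimes M$, $(M\otimes\xi)(\mathfrak m\otimes M)\delta=\mathfrak m$, $(\mathfrak m\otimes M\otimes M)(\delta\otimes M)\delta=(M\otimes\delta)(\mathfrak m\otimes M)\delta$; equivalently, a comonoid in the monoidal category $\mathscr R_{(\mathfrak C:A)}$. *)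

theory Defs
  imports "HOL-Library.Poly_Mapping"
begin

text \<open>An A-bimodule is given on an abelian group type 'x, with left action bm_l a x = a x,
 right action bm_r a x = x a, and a subgroup bm_null of elements regarded as zero
 (the bimodule is 'x / bm_null).  For an ordinary bimodule bm_null = {0}.  This presentation is
 needed because tensor products are built as quotients of free abelian groups.\<close>

record ('a, 'x) bimod =
  bm_l :: "'a \<Rightarrow> 'x \<Rightarrow> 'x"
  bm_r :: "'a \<Rightarrow> 'x \<Rightarrow> 'x"
  bm_null :: "'x set"

definition eqm :: "('a, 'x::ab_group_add) bimod \<Rightarrow> 'x \<Rightarrow> 'x \<Rightarrow> bool" where
  "eqm B x y \<longleftrightarrow> x - y \<in> bm_null B"

definition is_bimod :: "('a::ring_1, 'x::ab_group_add) bimod \<Rightarrow> bool" where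
  "is_bimod B \<longleftrightarrow>
     0 \<in> bm_null B \<and>
     (\<forall>x y. x \<in> bm_null B \<longrightarrow> y \<in> bm_null B \<longrightarrow> x + y \<in> bm_null B) \<and>
     (\<forall>x. x \<in> bm_null B \<longrightarrow> - x \<in> bm_null B) \<and>
     (\<forall>a x y. eqm B x y \<longrightarrow> eqm B (bm_l B a x) (bm_l B a y)) \<and>
     (\<forall>a x y. eqm B x y \<longrightarrow> eqm B (bm_r B a x) (bm_r B a y)) \<and>
     (\<forall>a x y. eqm B (bm_l B a (x + y)) (bm_l B a x + bm_l B a y)) \<and>
     (\<forall>a b x. eqm B (bm_l B (a + b) x) (bm_l B a x + bm_l B b x)) \<and>
     (\<forall>a b x. eqm B (bm_l B (a * b) x) (bm_l B a (bm_l B b x))) \<and>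
     (\<forall>x. eqm B (bm_l B 1 x) x) \<and>
     (\<forall>a x y. eqm B (bm_r B a (x + y)) (bm_r B a x + bm_r B a y)) \<and>
     (\<forall>a b x. eqm B (bm_r B (a + b) x) (bm_r B a x + bm_r B b x)) \<and>
     (\<forall>a b x. eqm B (bm_r B (a * b) x) (bm_r B b (bm_r B a x))) \<and>
     (\<forall>x. eqm B (bm_r B 1 x) x) \<and>
     (\<forall>a b x. eqm B (bm_l B a (bm_r B b x)) (bm_r B b (bm_l B a x)))"

definition ring_bimod :: "('a::ring_1, 'a) bimod" where
  "ring_bimod = \<lparr>bm_l = (\<lambda>a x. a * x), bm_r = (\<lambda>a x. x * a), bm_null = {0}\<rparr>"

inductive_set zspan :: "'x::ab_group_add set \<Rightarrow> 'x set" for S where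
  zspan_0: "0 \<in> zspan S"
| zspan_add: "s \<in> S \<Longrightarrow> u \<in> zspan S \<Longrightarrow> u + s \<in> zspan S"
| zspan_diff: "s \<in> S \<Longrightarrow> u \<in> zspan S \<Longrightarrow> u - s \<in> zspan S"

definition tensor_rels :: "('a, 'x::ab_group_add) bimod \<Rightarrow> ('a, 'y::ab_group_add) bimod
    \<Rightarrow> ('x \<times> 'y \<Rightarrow>\<^sub>0 int) set" where
  "tensor_rels B D =
     {frag_of (x + x', y) - frag_of (x, y) - frag_of (x', y) | x x' y. True} \<union>
     {frag_of (x, y + y') - frag_of (x, y) - frag_of (x, y') | x y y'. True} \<union>
     {frag_of (bm_r B a x, y) - frag_of (x, bm_l D a y) | a x y. True} \<union>
     {frag_of (x, y) | x y. x \<in> bm_null B} \<union>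
     {frag_of (x, y) | x y. y \<in> bm_null D}"

definition tensor :: "('a, 'x::ab_group_add) bimod \<Rightarrow> ('a, 'y::ab_group_add) bimod
    \<Rightarrow> ('a, 'x \<times> 'y \<Rightarrow>\<^sub>0 int) bimod" where
  "tensor B D =
     \<lparr>bm_l = (\<lambda>a. frag_extend (\<lambda>(x, y). frag_of (bm_l B a x, y))),
      bm_r = (\<lambda>a. frag_extend (\<lambda>(x, y). frag_of (x, bm_r D a y))),
      bm_null = zspan (tensor_rels B D)\<rparr>"

definition tmap :: "('x \<Rightarrow> 'x') \<Rightarrow> ('y \<Rightarrow> 'y') \<Rightarrow> ('x \<times> 'y \<Rightarrow>\<^sub>0 int) \<Rightarrow> ('x' \<times> 'y' \<Rightarrow>\<^sub>0 int)" where
  "tmap f g = frag_extend (\<lambda>(x, y). frag_of (f x, g y))"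

definition asr :: "(('x \<times> 'y \<Rightarrow>\<^sub>0 int) \<times> 'z \<Rightarrow>\<^sub>0 int) \<Rightarrow> ('x \<times> ('y \<times> 'z \<Rightarrow>\<^sub>0 int) \<Rightarrow>\<^sub>0 int)" where
  "asr = frag_extend (\<lambda>(u, z). frag_extend (\<lambda>(x, y). frag_of (x, frag_of (y, z))) u)"

definition asl :: "('x \<times> ('y \<times> 'z \<Rightarrow>\<^sub>0 int) \<Rightarrow>\<^sub>0 int) \<Rightarrow> (('x \<times> 'y \<Rightarrow>\<^sub>0 int) \<times> 'z \<Rightarrow>\<^sub>0 int)" where
  "asl = frag_extend (\<lambda>(x, v). frag_extend (\<lambda>(y, z). frag_of (frag_of (x, y), z)) v)"

definition zmul :: "int \<Rightarrow> 'x::ab_group_add \<Rightarrow> 'x" where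
  "zmul n x = (if 0 \<le> n then (\<Sum>i<nat n. x) else - (\<Sum>i<nat (- n). x))"

definition gext :: "('b \<Rightarrow> 'x::ab_group_add) \<Rightarrow> ('b \<Rightarrow>\<^sub>0 int) \<Rightarrow> 'x" where
  "gext f u = (\<Sum>k\<in>Poly_Mapping.keys u. zmul (Poly_Mapping.lookup u k) (f k))"

definition lunit :: "('a, 'x::ab_group_add) bimod \<Rightarrow> ('a \<times> 'x \<Rightarrow>\<^sub>0 int) \<Rightarrow> 'x" where
  "lunit B = gext (\<lambda>(a, x). bm_l B a x)"

definition runit :: "('a, 'x::ab_group_add) bimod \<Rightarrow> ('x \<times> 'a \<Rightarrow>\<^sub>0 int) \<Rightarrow> 'x" where
  "runit B = gext (\<lambda>(x, a). bm_r B a x)"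

definition mapeq :: "('a, 'y::ab_group_add) bimod \<Rightarrow> ('x \<Rightarrow> 'y) \<Rightarrow> ('x \<Rightarrow> 'y) \<Rightarrow> bool" where
  "mapeq D f g \<longleftrightarrow> (\<forall>x. eqm D (f x) (g x))"

definition bilinear :: "('a, 'x::ab_group_add) bimod \<Rightarrow> ('a, 'y::ab_group_add) bimod \<Rightarrow> ('x \<Rightarrow> 'y) \<Rightarrow> bool" where
  "bilinear B D f \<longleftrightarrow>
     (\<forall>x y. eqm B x y \<longrightarrow> eqm D (f x) (f y)) \<and>
     (\<forall>x y. eqm D (f (x + y)) (f x + f y)) \<and>
     (\<forall>a x. eqm D (f (bm_l B a x)) (bm_l D a (f x))) \<and>
     (\<forall>a x. eqm D (f (bm_r B a x)) (bm_r D a (f x)))"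

definition is_coring :: "('a::ring_1, 'c::ab_group_add) bimod \<Rightarrow> ('c \<Rightarrow> ('c \<times> 'c \<Rightarrow>\<^sub>0 int)) \<Rightarrow> ('c \<Rightarrow> 'a) \<Rightarrow> bool" where
  "is_coring C \<Delta> \<epsilon> \<longleftrightarrow>
     is_bimod C \<and> bilinear C (tensor C C) \<Delta> \<and> bilinear C ring_bimod \<epsilon> \<and>
     mapeq (tensor C (tensor C C)) (asr \<circ> tmap \<Delta> id \<circ> \<Delta>) (tmap id \<Delta> \<circ> \<Delta>) \<and>
     mapeq C (lunit C \<circ> tmap \<epsilon> id \<circ> \<Delta>) id \<and>
     mapeq C (runit C \<circ> tmap id \<epsilon> \<circ> \<Delta>) id"

definition coring_morph :: "('a::ring_1, 'd::ab_group_add) bimod \<Rightarrow> ('a, 'c::ab_group_add) bimod \<Rightarrow> ('d \<Rightarrow> 'c)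
    \<Rightarrow> ('d \<Rightarrow> ('d \<times> 'd \<Rightarrow>\<^sub>0 int)) \<Rightarrow> ('d \<Rightarrow> 'a) \<Rightarrow> ('c \<Rightarrow> ('c \<times> 'c \<Rightarrow>\<^sub>0 int)) \<Rightarrow> ('c \<Rightarrow> 'a) \<Rightarrow> bool" where
  "coring_morph D C \<phi> \<Delta>D \<epsilon>D \<Delta>C \<epsilon>C \<longleftrightarrow>
     bilinear D C \<phi> \<and>
     mapeq ring_bimod (\<epsilon>C \<circ> \<phi>) \<epsilon>D \<and>
     mapeq (tensor C C) (tmap \<phi> \<phi> \<circ> \<Delta>D) (\<Delta>C \<circ> \<phi>)"

definition in_R :: "('a::ring_1, 'c::ab_group_add) bimod \<Rightarrow> ('c \<Rightarrow> ('c \<times> 'c \<Rightarrow>\<^sub>0 int)) \<Rightarrow> ('c \<Rightarrow> 'a)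
    \<Rightarrow> ('a, 'm::ab_group_add) bimod \<Rightarrow> (('c \<times> 'm \<Rightarrow>\<^sub>0 int) \<Rightarrow> ('m \<times> 'c \<Rightarrow>\<^sub>0 int)) \<Rightarrow> bool" where
  "in_R C \<Delta> \<epsilon> M mm \<longleftrightarrow>
     is_bimod M \<and> bilinear (tensor C M) (tensor M C) mm \<and>
     mapeq (tensor (tensor M C) C) (asl \<circ> tmap id \<Delta> \<circ> mm)
        (tmap mm id \<circ> asl \<circ> tmap id mm \<circ> asr \<circ> tmap \<Delta> id) \<and>
     mapeq M (runit M \<circ> tmap id \<epsilon> \<circ> mm) (lunit M \<circ> tmap \<epsilon> id)"

text \<open>Coactions: left and right coaction of C \<otimes> M, and right coaction of C \<otimes> M \<otimes> M
 (the left coaction of C \<otimes> (M \<otimes> M) is again asr \<circ> tmap \<Delta> id).\<close>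
definition cm_lco where "cm_lco \<Delta> = asr \<circ> tmap \<Delta> id"
definition cm_rco where "cm_rco \<Delta> mm = asl \<circ> tmap id mm \<circ> asr \<circ> tmap \<Delta> id"
definition cmm_rco where
  "cmm_rco \<Delta> mm = asl \<circ> tmap id asl \<circ> tmap id (tmap id mm) \<circ> tmap id (asr \<circ> tmap mm id \<circ> asl)
                    \<circ> asr \<circ> tmap \<Delta> id"

definition is_cowreath :: "('a::ring_1, 'c::ab_group_add) bimod \<Rightarrow> ('c \<Rightarrow> ('c \<times> 'c \<Rightarrow>\<^sub>0 int)) \<Rightarrow> ('c \<Rightarrow> 'a)
    \<Rightarrow> ('a, 'm::ab_group_add) bimod \<Rightarrow> (('c \<times> 'm \<Rightarrow>\<^sub>0 int) \<Rightarrow> ('m \<times> 'c \<Rightarrow>\<^sub>0 int))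
    \<Rightarrow> (('c \<times> 'm \<Rightarrow>\<^sub>0 int) \<Rightarrow> 'c)
    \<Rightarrow> (('c \<times> 'm \<Rightarrow>\<^sub>0 int) \<Rightarrow> ('c \<times> ('m \<times> 'm \<Rightarrow>\<^sub>0 int) \<Rightarrow>\<^sub>0 int)) \<Rightarrow> bool" where
  "is_cowreath C \<Delta> \<epsilon> M mm \<xi> \<delta> \<longleftrightarrow>
     in_R C \<Delta> \<epsilon> M mm \<and>
     bilinear (tensor C M) C \<xi> \<and>
     mapeq (tensor C C) (\<Delta> \<circ> \<xi>) (tmap id \<xi> \<circ> cm_lco \<Delta>) \<and>
     mapeq (tensor C C) (\<Delta> \<circ> \<xi>) (tmap \<xi> id \<circ> cm_rco \<Delta> mm) \<and>
     bilinear (tensor C M) (tensor C (tensor M M)) \<delta> \<and>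
     mapeq (tensor C (tensor C (tensor M M))) (cm_lco \<Delta> \<circ> \<delta>) (tmap id \<delta> \<circ> cm_lco \<Delta>) \<and>
     mapeq (tensor (tensor C (tensor M M)) C) (cmm_rco \<Delta> mm \<circ> \<delta>) (tmap \<delta> id \<circ> cm_rco \<Delta> mm) \<and>
     mapeq (tensor C M) (tmap \<xi> id \<circ> asl \<circ> \<delta>) id \<and>
     mapeq (tensor M C) (tmap id \<xi> \<circ> asr \<circ> tmap mm id \<circ> asl \<circ> \<delta>) mm \<and>
     mapeq (tensor M (tensor C (tensor M M)))
        (asr \<circ> tmap mm id \<circ> asl \<circ> tmap id asr \<circ> asr \<circ> tmap \<delta> id \<circ> asl \<circ> \<delta>)
        (tmap id \<delta> \<circ> asr \<circ> tmap mm id \<circ> asl \<circ> \<delta>)"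

definition cw_comult where
  "cw_comult \<Delta> mm \<delta> = asl \<circ> tmap id (asr \<circ> tmap mm id \<circ> asl) \<circ> tmap id \<delta> \<circ> asr \<circ> tmap \<Delta> id"

end

theory Submission
  imports Defs
begin

lemma zspan_inc: "s \<in> S \<Longrightarrow> s \<in> zspan S"
  using zspan.zspan_add[OF _ zspan.zspan_0] by fastforce

lemma zspan_plus0: "v \<in> zspan S \<Longrightarrow> u \<in> zspan S \<Longrightarrow> u + v \<in> zspan S"
proof (induction v rule: zspan.induct)
  case zspan_0 then show ?case by simp
next
  case (zspan_add s w) then show ?case by (metis add.assoc zspan.zspan_add)
next
  case (zspan_diff s w) then show ?case by (metis add_diff_eq zspan.zspan_diff)
qed

lemma zspan_plus: "u \<in> zspan S \<Longrightarrow> v \<in> zspan S \<Longrightarrow> u + v \<in> zspan S"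
  using zspan_plus0 by blast

lemma zspan_uminus: "u \<in> zspan S \<Longrightarrow> - u \<in> zspan S"
proof (induction u rule: zspan.induct)
  case zspan_0 then show ?case by (simp add: zspan.zspan_0)
next
  case (zspan_add s w)
  have "- (w + s) = (- w) - s" by simp
  then show ?case using zspan_add by (metis zspan.zspan_diff)
next
  case (zspan_diff s w)
  have "- (w - s) = (- w) + s" by simp
  then show ?case using zspan_diff by (metis zspan.zspan_add)
qed

lemma zspan_minus: "u \<in> zspan S \<Longrightarrow> v \<in> zspan S \<Longrightarrow> u - v \<in> zspan S"
  by (metis diff_conv_add_uminus zspan_plus zspan_uminus)

lemma zspan_fe:
  assumes "\<And>k. h k \<in> zspan S"
  shows "frag_extend h u \<in> zspan S"
  using subset_UNIV[of "Poly_Mapping.keys u"]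
proof (induction u rule: frag_induction)
  case zero then show ?case by (simp add: zspan.zspan_0)
next
  case (one x) then show ?case using assms by simp
next
  case (diff a b) then show ?case by (simp add: frag_extend_diff zspan_minus)
qed

lemma tensor_sel[simp]:
  "bm_null (tensor B D) = zspan (tensor_rels B D)"
  "bm_l (tensor B D) a = frag_extend (\<lambda>(x, y). frag_of (bm_l B a x, y))"
  "bm_r (tensor B D) a = frag_extend (\<lambda>(x, y). frag_of (x, bm_r D a y))"
  by (simp_all add: tensor_def)

definition grp :: "('a, 'x::ab_group_add) bimod \<Rightarrow> bool" where
  "grp D \<longleftrightarrow> 0 \<in> bm_null D \<and> (\<forall>x y. x \<in> bm_null D \<longrightarrow> y \<in> bm_null D \<longrightarrow> x + y \<in> bm_null D)
     \<and> (\<forall>x. x \<in> bm_null D \<longrightarrow> - x \<in> bm_null D)"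

lemma grp_tensor[simp]: "grp (tensor B D)"
  by (simp add: grp_def zspan.zspan_0 zspan_plus zspan_uminus)

lemma grp_bimod: "is_bimod D \<Longrightarrow> grp D"
  by (simp add: grp_def is_bimod_def)

lemma grp_ring[simp]: "grp ring_bimod"
  by (simp add: grp_def ring_bimod_def)

lemma eqm_ring[simp]: "eqm ring_bimod x y \<longleftrightarrow> x = y"
  by (simp add: eqm_def ring_bimod_def)

context fixes D :: "('a, 'x::ab_group_add) bimod" assumes G: "grp D"
begin
lemma g0: "0 \<in> bm_null D" using G by (simp add: grp_def)
lemma gadd: "x \<in> bm_null D \<Longrightarrow> y \<in> bm_null D \<Longrightarrow> x + y \<in> bm_null D" using G by (simp add: grp_def)
lemma gneg: "x \<in> bm_null D \<Longrightarrow> - x \<in> bm_null D" using G by (simp add: grp_def)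
lemma gdiff: "x \<in> bm_null D \<Longrightarrow> y \<in> bm_null D \<Longrightarrow> x - y \<in> bm_null D"
  by (metis diff_conv_add_uminus gadd gneg)
lemma eqm_refl: "eqm D x x" by (simp add: eqm_def g0)
lemma eqm_sym: "eqm D x y \<Longrightarrow> eqm D y x"
  unfolding eqm_def using gneg[of "x - y"] by simp
lemma eqm_trans: "eqm D x y \<Longrightarrow> eqm D y z \<Longrightarrow> eqm D x z"
proof -
  assume "eqm D x y" "eqm D y z"
  then have "(x - y) + (y - z) \<in> bm_null D" unfolding eqm_def by (rule gadd)
  then show ?thesis by (simp add: eqm_def)
qed
lemma eqm_add: "eqm D x x' \<Longrightarrow> eqm D y y' \<Longrightarrow> eqm D (x + y) (x' + y')"
proof -
  assume "eqm D x x'" "eqm D y y'"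
  then have "(x - x') + (y - y') \<in> bm_null D" unfolding eqm_def by (rule gadd)
  then show ?thesis by (simp add: eqm_def algebra_simps)
qed
lemma eqm_uminus: "eqm D x x' \<Longrightarrow> eqm D (- x) (- x')"
proof -
  assume "eqm D x x'"
  then have "- (x - x') \<in> bm_null D" unfolding eqm_def by (rule gneg)
  then show ?thesis by (simp add: eqm_def)
qed
lemma eqm_diff: "eqm D x x' \<Longrightarrow> eqm D y y' \<Longrightarrow> eqm D (x - y) (x' - y')"
  by (metis diff_conv_add_uminus eqm_add eqm_uminus)
lemma eqm_null: "x \<in> bm_null D \<Longrightarrow> eqm D x 0" by (simp add: eqm_def)
lemma null_eqm: "eqm D x 0 \<Longrightarrow> x \<in> bm_null D" by (simp add: eqm_def)
lemma eqm_null_iff: "eqm D x y \<longleftrightarrow> x - y \<in> bm_null D" by (simp add: eqm_def)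
end

lemma eqm_fe:
  assumes "\<And>k. eqm (tensor B D) (h k) (h' k)"
  shows "eqm (tensor B D) (frag_extend h u) (frag_extend h' u)"
proof -
  have "frag_extend (\<lambda>k. h k - h' k) u \<in> zspan (tensor_rels B D)"
    by (rule zspan_fe) (use assms in \<open>simp add: eqm_def\<close>)
  moreover have "frag_extend (\<lambda>k. h k - h' k) u = frag_extend h u - frag_extend h' u"
    using subset_UNIV[of "Poly_Mapping.keys u"]
    by (induction u rule: frag_induction) (auto simp: frag_extend_diff algebra_simps)
  ultimately show ?thesis by (simp add: eqm_def)
qed

lemma eqm_fe0:
  assumes "\<And>k. eqm (tensor B D) (h k) 0"
  shows "eqm (tensor B D) (frag_extend h u) 0"
  using eqm_fe[of B D h "\<lambda>_. 0" u] assms by (simp add: frag_extend_def)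

lemmas tT = eqm_trans[OF grp_tensor] eqm_sym[OF grp_tensor] eqm_refl[OF grp_tensor]
  eqm_add[OF grp_tensor] eqm_diff[OF grp_tensor] eqm_uminus[OF grp_tensor]

lemma r_add1: "eqm (tensor B D) (frag_of (x + x', y)) (frag_of (x, y) + frag_of (x', y))"
proof -
  have "frag_of (x + x', y) - frag_of (x, y) - frag_of (x', y) \<in> tensor_rels B D"
    unfolding tensor_rels_def by blast
  then show ?thesis by (simp add: eqm_def diff_diff_add zspan_inc)
qed
lemma r_add2: "eqm (tensor B D) (frag_of (x, y + y')) (frag_of (x, y) + frag_of (x, y'))"
proof -
  have "frag_of (x, y + y') - frag_of (x, y) - frag_of (x, y') \<in> tensor_rels B D"
    unfolding tensor_rels_def by blast
  then show ?thesis by (simp add: eqm_def diff_diff_add zspan_inc)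
qed
lemma r_bal: "eqm (tensor B D) (frag_of (bm_r B a x, y)) (frag_of (x, bm_l D a y))"
proof -
  have "frag_of (bm_r B a x, y) - frag_of (x, bm_l D a y) \<in> tensor_rels B D"
    unfolding tensor_rels_def by blast
  then show ?thesis by (simp add: eqm_def zspan_inc)
qed
lemma r_null1: "x \<in> bm_null B \<Longrightarrow> eqm (tensor B D) (frag_of (x, y)) 0"
proof -
  assume "x \<in> bm_null B"
  then have "frag_of (x, y) \<in> tensor_rels B D"
    unfolding tensor_rels_def by blast
  then show ?thesis by (simp add: eqm_def zspan_inc)
qed
lemma r_null2: "y \<in> bm_null D \<Longrightarrow> eqm (tensor B D) (frag_of (x, y)) 0"
proof -
  assume "y \<in> bm_null D"
  then have "frag_of (x, y) \<in> tensor_rels B D"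
    unfolding tensor_rels_def by blast
  then show ?thesis by (simp add: eqm_def zspan_inc)
qed

lemma s1_zero: "eqm (tensor B D) (frag_of (0, y)) 0"
proof -
  have "eqm (tensor B D) (frag_of (0, y)) (frag_of (0, y) + frag_of (0, y))"
    using r_add1[of B D 0 0 y] by simp
  then have "- frag_of (0, y) \<in> zspan (tensor_rels B D)" by (simp add: eqm_def)
  then show ?thesis using zspan_uminus[of "- frag_of (0, y)"] by (simp add: eqm_def)
qed
lemma s2_zero: "eqm (tensor B D) (frag_of (x, 0)) 0"
proof -
  have "eqm (tensor B D) (frag_of (x, 0)) (frag_of (x, 0) + frag_of (x, 0))"
    using r_add2[of B D x 0 0] by simp
  then have "- frag_of (x, 0) \<in> zspan (tensor_rels B D)" by (simp add: eqm_def)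
  then show ?thesis using zspan_uminus[of "- frag_of (x, 0)"] by (simp add: eqm_def)
qed
lemma s1_diff: "eqm (tensor B D) (frag_of (x - x', y)) (frag_of (x, y) - frag_of (x', y))"
proof -
  have "eqm (tensor B D) (frag_of (x, y)) (frag_of (x - x', y) + frag_of (x', y))"
    using r_add1[of B D "x - x'" x' y] by simp
  then show ?thesis by (simp add: eqm_def algebra_simps zspan_uminus) (metis minus_diff_eq zspan_uminus)
qed
lemma s2_diff: "eqm (tensor B D) (frag_of (x, y - y')) (frag_of (x, y) - frag_of (x, y'))"
proof -
  have "eqm (tensor B D) (frag_of (x, y)) (frag_of (x, y - y') + frag_of (x, y'))"
    using r_add2[of B D x "y - y'" y'] by simp
  then show ?thesis by (simp add: eqm_def algebra_simps zspan_uminus) (metis minus_diff_eq zspan_uminus)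
qed
lemma s1_eq: "eqm B x x' \<Longrightarrow> eqm (tensor B D) (frag_of (x, y)) (frag_of (x', y))"
proof -
  assume "eqm B x x'"
  then have "eqm (tensor B D) (frag_of (x - x', y)) 0" by (intro r_null1) (simp add: eqm_def)
  then have "eqm (tensor B D) (frag_of (x, y) - frag_of (x', y)) 0"
    using s1_diff tT by metis
  then show ?thesis by (simp add: eqm_def)
qed
lemma s2_eq: "eqm D y y' \<Longrightarrow> eqm (tensor B D) (frag_of (x, y)) (frag_of (x, y'))"
proof -
  assume "eqm D y y'"
  then have "eqm (tensor B D) (frag_of (x, y - y')) 0" by (intro r_null2) (simp add: eqm_def)
  then have "eqm (tensor B D) (frag_of (x, y) - frag_of (x, y')) 0"
    using s2_diff tT by metis
  then show ?thesis by (simp add: eqm_def)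
qed

lemma s1_fe: "eqm (tensor B D) (frag_of (frag_extend h w, y)) (frag_extend (\<lambda>k. frag_of (h k, y)) w)"
  using subset_UNIV[of "Poly_Mapping.keys w"]
proof (induction w rule: frag_induction)
  case zero then show ?case by (simp add: s1_zero)
next
  case (one x) then show ?case by (simp add: tT(3))
next
  case (diff a b)
  show ?case unfolding frag_extend_diff by (rule tT(1)[OF s1_diff tT(5)[OF diff]])
qed
lemma s2_fe: "eqm (tensor B D) (frag_of (x, frag_extend h w)) (frag_extend (\<lambda>k. frag_of (x, h k)) w)"
  using subset_UNIV[of "Poly_Mapping.keys w"]
proof (induction w rule: frag_induction)
  case zero then show ?case by (simp add: s2_zero)
next
  case (one y) then show ?case by (simp add: tT(3))
next
  case (diff a b)
  show ?case unfolding frag_extend_diff by (rule tT(1)[OF s2_diff tT(5)[OF diff]])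
qed

lemma fe_fe: "frag_extend f (frag_extend g u) = frag_extend (\<lambda>k. frag_extend f (g k)) u"
  using subset_UNIV[of "Poly_Mapping.keys u"]
  by (induction u rule: frag_induction) (auto simp: frag_extend_diff)

lemma fe_id[simp]: "frag_extend frag_of u = u"
  by (metis frag_expansion)

lemma fe_swap: "frag_extend (\<lambda>a. frag_extend (\<lambda>b. f a b) w) v = frag_extend (\<lambda>b. frag_extend (\<lambda>a. f a b) v) w"
  using subset_UNIV[of "Poly_Mapping.keys v"]
proof (induction v rule: frag_induction)
  case zero then show ?case by (simp add: frag_extend_def)
next
  case (one x) then show ?case by simp
next
  case (diff a b)
  have "frag_extend (\<lambda>b'. frag_extend (\<lambda>a'. f a' b') (a - b)) w
      = frag_extend (\<lambda>b'. frag_extend (\<lambda>a'. f a' b') a - frag_extend (\<lambda>a'. f a' b') b) w"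
    by (simp add: frag_extend_diff)
  also have "\<dots> = frag_extend (\<lambda>b'. frag_extend (\<lambda>a'. f a' b') a) w - frag_extend (\<lambda>b'. frag_extend (\<lambda>a'. f a' b') b) w"
    using subset_UNIV[of "Poly_Mapping.keys w"]
    by (induction w rule: frag_induction) (auto simp: frag_extend_diff algebra_simps)
  finally show ?case using diff by (simp add: frag_extend_diff)
qed

definition resp :: "('a, 'x::ab_group_add) bimod \<Rightarrow> ('a, 'y::ab_group_add) bimod \<Rightarrow> ('x \<Rightarrow> 'y) \<Rightarrow> bool" where
  "resp B D f \<longleftrightarrow> (\<forall>x y. eqm B x y \<longrightarrow> eqm D (f x) (f y))"
definition addm :: "('a, 'y::ab_group_add) bimod \<Rightarrow> ('x::ab_group_add \<Rightarrow> 'y) \<Rightarrow> bool" where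
  "addm D f \<longleftrightarrow> (\<forall>x y. eqm D (f (x + y)) (f x + f y))"
definition rlin :: "('a, 'x::ab_group_add) bimod \<Rightarrow> ('a, 'y::ab_group_add) bimod \<Rightarrow> ('x \<Rightarrow> 'y) \<Rightarrow> bool" where
  "rlin B D f \<longleftrightarrow> resp B D f \<and> addm D f \<and> (\<forall>a x. eqm D (f (bm_r B a x)) (bm_r D a (f x)))"
definition llin :: "('a, 'x::ab_group_add) bimod \<Rightarrow> ('a, 'y::ab_group_add) bimod \<Rightarrow> ('x \<Rightarrow> 'y) \<Rightarrow> bool" where
  "llin B D f \<longleftrightarrow> resp B D f \<and> addm D f \<and> (\<forall>a x. eqm D (f (bm_l B a x)) (bm_l D a (f x)))"

lemma bilinear_iff: "bilinear B D f \<longleftrightarrow> rlin B D f \<and> llin B D f"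
  by (auto simp: bilinear_def rlin_def llin_def resp_def addm_def)

lemma bil_resp: "bilinear B D f \<Longrightarrow> eqm B x y \<Longrightarrow> eqm D (f x) (f y)"
  by (simp add: bilinear_def)
lemma bil_add: "bilinear B D f \<Longrightarrow> eqm D (f (x + y)) (f x + f y)"
  by (simp add: bilinear_def)
lemma bil_l: "bilinear B D f \<Longrightarrow> eqm D (f (bm_l B a x)) (bm_l D a (f x))"
  by (simp add: bilinear_def)
lemma bil_r: "bilinear B D f \<Longrightarrow> eqm D (f (bm_r B a x)) (bm_r D a (f x))"
  by (simp add: bilinear_def)

lemma addm_zero: "grp D \<Longrightarrow> addm D f \<Longrightarrow> eqm D (f 0) 0"
proof -
  assume g: "grp D" and a: "addm D f"
  then have "eqm D (f 0) (f 0 + f 0)" using a unfolding addm_def by (metis add_0)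
  then show ?thesis unfolding eqm_def using gneg[OF g] by fastforce
qed

lemma resp_null: "grp D \<Longrightarrow> resp B D f \<Longrightarrow> addm D f \<Longrightarrow> x \<in> bm_null B \<Longrightarrow> eqm D (f x) 0"
proof -
  assume g: "grp D" and r: "resp B D f" and a: "addm D f" and x: "x \<in> bm_null B"
  have "eqm B x 0" using x by (simp add: eqm_def)
  then have "eqm D (f x) (f 0)" using r by (simp add: resp_def)
  then show ?thesis using addm_zero[OF g a] eqm_trans[OF g] by blast
qed

lemma bil_null: "grp D \<Longrightarrow> bilinear B D f \<Longrightarrow> x \<in> bm_null B \<Longrightarrow> f x \<in> bm_null D"
  using resp_null[of D B f x] by (auto simp: bilinear_iff rlin_def eqm_def)

lemma rlin_null: "grp D \<Longrightarrow> rlin B D f \<Longrightarrow> x \<in> bm_null B \<Longrightarrow> f x \<in> bm_null D"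
  using resp_null[of D B f x] by (auto simp: rlin_def eqm_def)
lemma llin_null: "grp D \<Longrightarrow> llin B D f \<Longrightarrow> x \<in> bm_null B \<Longrightarrow> f x \<in> bm_null D"
  using resp_null[of D B f x] by (auto simp: llin_def eqm_def)

lemma bil_comp:
  assumes "bilinear B D f" "bilinear D E g" "grp E"
  shows "bilinear B E (g \<circ> f)"
proof -
  note tr = eqm_trans[OF assms(3)]
  show ?thesis using assms(1,2) unfolding bilinear_def comp_def
    by (meson tr)
qed

lemma bil_id: "grp B \<Longrightarrow> bilinear B B id"
  by (simp add: bilinear_def eqm_refl)

lemma fe_plus_fun: "frag_extend (\<lambda>k. f k + g k) u = frag_extend f u + frag_extend g u"
  by (simp add: frag_extend_def frag_cmul_distrib2 sum.distrib)
lemma fe_minus_fun: "frag_extend (\<lambda>k. f k - g k) u = frag_extend f u - frag_extend g u"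
proof -
  have "frag_extend f u = frag_extend (\<lambda>k. (f k - g k) + g k) u" by simp
  also have "\<dots> = frag_extend (\<lambda>k. f k - g k) u + frag_extend g u" by (rule fe_plus_fun)
  finally show ?thesis by (simp add: algebra_simps)
qed
  
lemma fe_zspan_hom:
  assumes "\<And>s. s \<in> S \<Longrightarrow> frag_extend h s \<in> zspan T" and "u \<in> zspan S"
  shows "frag_extend h u \<in> zspan T"
  using assms(2)
proof (induction u rule: zspan.induct)
  case zspan_0 then show ?case by (simp add: zspan.zspan_0)
next
  case (zspan_add s w) then show ?case by (simp add: frag_extend_add assms(1) zspan_plus)
next
  case (zspan_diff s w) then show ?case by (simp add: frag_extend_diff assms(1) zspan_minus)
qed

lemma fe_resp:
  assumes a1: "\<And>x x' y. eqm (tensor B' D') (h (x + x', y)) (h (x, y) + h (x', y))"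
    and a2: "\<And>x y y'. eqm (tensor B' D') (h (x, y + y')) (h (x, y) + h (x, y'))"
    and b: "\<And>a x y. eqm (tensor B' D') (h (bm_r B a x, y)) (h (x, bm_l D a y))"
    and n1: "\<And>x y. x \<in> bm_null B \<Longrightarrow> eqm (tensor B' D') (h (x, y)) 0"
    and n2: "\<And>x y. y \<in> bm_null D \<Longrightarrow> eqm (tensor B' D') (h (x, y)) 0"
  shows "resp (tensor B D) (tensor B' D') (frag_extend h)"
proof -
  have rel: "frag_extend h s \<in> zspan (tensor_rels B' D')" if "s \<in> tensor_rels B D" for s
  proof -
    from that consider (c1) x x' y where "s = frag_of (x + x', y) - frag_of (x, y) - frag_of (x', y)"
      | (c2) x y y' where "s = frag_of (x, y + y') - frag_of (x, y) - frag_of (x, y')"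
      | (c3) a x y where "s = frag_of (bm_r B a x, y) - frag_of (x, bm_l D a y)"
      | (c4) x y where "s = frag_of (x, y)" "x \<in> bm_null B"
      | (c5) x y where "s = frag_of (x, y)" "y \<in> bm_null D"
      unfolding tensor_rels_def by blast
    then show ?thesis
    proof cases
      case (c1 x x' y)
      then show ?thesis using a1[of x x' y] by (simp add: frag_extend_diff frag_extend_add eqm_def diff_diff_add)
    next
      case (c2 x y y')
      then show ?thesis using a2[of x y y'] by (simp add: frag_extend_diff frag_extend_add eqm_def diff_diff_add)
    next
      case (c3 a x y)
      then show ?thesis using b[of a x y] by (simp add: frag_extend_diff eqm_def)
    next
      case (c4 x y)
      then show ?thesis using n1[where x=x and y=y] by (simp add: eqm_def)
    next
      case (c5 x y)
      then show ?thesis using n2[where x=x and y=y] by (simp add: eqm_def)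
    qed
  qed
  show ?thesis unfolding resp_def
  proof (intro allI impI)
    fix u v assume "eqm (tensor B D) u v"
    then have "frag_extend h (u - v) \<in> zspan (tensor_rels B' D')"
      by (intro fe_zspan_hom[OF rel]) (auto simp: eqm_def)
    then show "eqm (tensor B' D') (frag_extend h u) (frag_extend h v)"
      by (simp add: eqm_def frag_extend_diff)
  qed
qed

lemma fe_addm[simp]: "addm (tensor B D) (frag_extend h)"
  by (simp add: addm_def frag_extend_add tT(3))

lemma tmap_resp:
  assumes gB: "grp B'" and gD: "grp D'" and f: "rlin B B' f" and g: "llin D D' g"
  shows "resp (tensor B D) (tensor B' D') (tmap f g)"
  unfolding tmap_def
proof (rule fe_resp; clarsimp)
  fix x x' y
  have "eqm (tensor B' D') (frag_of (f (x + x'), g y)) (frag_of (f x + f x', g y))"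
    using f by (intro s1_eq) (simp add: rlin_def addm_def)
  then show "eqm (tensor B' D') (frag_of (f (x + x'), g y)) (frag_of (f x, g y) + frag_of (f x', g y))"
    using r_add1 tT by metis
next
  fix x y y'
  have "eqm (tensor B' D') (frag_of (f x, g (y + y'))) (frag_of (f x, g y + g y'))"
    using g by (intro s2_eq) (simp add: llin_def addm_def)
  then show "eqm (tensor B' D') (frag_of (f x, g (y + y'))) (frag_of (f x, g y) + frag_of (f x, g y'))"
    using r_add2 tT by metis
next
  fix a x y
  have 1: "eqm (tensor B' D') (frag_of (f (bm_r B a x), g y)) (frag_of (bm_r B' a (f x), g y))"
    using f by (intro s1_eq) (simp add: rlin_def)
  have 2: "eqm (tensor B' D') (frag_of (f x, g (bm_l D a y))) (frag_of (f x, bm_l D' a (g y)))"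
    using g by (intro s2_eq) (simp add: llin_def)
  show "eqm (tensor B' D') (frag_of (f (bm_r B a x), g y)) (frag_of (f x, g (bm_l D a y)))"
    using 1 2 r_bal tT by metis
next
  fix x y assume "x \<in> bm_null B"
  then show "eqm (tensor B' D') (frag_of (f x, g y)) 0" using rlin_null[OF gB f] r_null1 by blast
next
  fix x y assume "y \<in> bm_null D"
  then show "eqm (tensor B' D') (frag_of (f x, g y)) 0" using llin_null[OF gD g] r_null2 by blast
qed

lemma tmap_bil:
  assumes gB: "grp B'" and gD: "grp D'" and f: "bilinear B B' f" and g: "bilinear D D' g"
  shows "bilinear (tensor B D) (tensor B' D') (tmap f g)"
proof -
  have r: "resp (tensor B D) (tensor B' D') (tmap f g)"
    by (intro tmap_resp[OF gB gD]) (use f g in \<open>simp_all add: bilinear_iff\<close>)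
  have l: "eqm (tensor B' D') (tmap f g (bm_l (tensor B D) a u)) (bm_l (tensor B' D') a (tmap f g u))" for a u
    unfolding tmap_def by (simp add: fe_fe case_prod_unfold) (intro eqm_fe s1_eq bil_l[OF f])
  have rr: "eqm (tensor B' D') (tmap f g (bm_r (tensor B D) a u)) (bm_r (tensor B' D') a (tmap f g u))" for a u
    unfolding tmap_def by (simp add: fe_fe case_prod_unfold) (intro eqm_fe s2_eq bil_r[OF g])
  show ?thesis using r l rr unfolding bilinear_def resp_def
    by (simp add: tmap_def frag_extend_add tT(3))
qed

lemmas fe_simps = tmap_def asr_def asl_def fe_fe case_prod_unfold frag_extend_add frag_extend_diff

lemma null_eqm_t: "eqm (tensor B D) a 0 \<Longrightarrow> a \<in> zspan (tensor_rels B D)"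
  by (simp add: eqm_def)

lemma asr_inner_resp:
  "resp (tensor B D) (tensor B (tensor D E)) (frag_extend (\<lambda>(x, y). frag_of (x, frag_of (y, z))))"
proof (rule fe_resp; clarsimp)
  fix x x' y show "eqm (tensor B (tensor D E)) (frag_of (x + x', frag_of (y, z)))
        (frag_of (x, frag_of (y, z)) + frag_of (x', frag_of (y, z)))" by (rule r_add1)
next
  fix x y y'
  have "eqm (tensor B (tensor D E)) (frag_of (x, frag_of (y + y', z))) (frag_of (x, frag_of (y, z) + frag_of (y', z)))"
    by (intro s2_eq r_add1)
  then show "eqm (tensor B (tensor D E)) (frag_of (x, frag_of (y + y', z)))
        (frag_of (x, frag_of (y, z)) + frag_of (x, frag_of (y', z)))" using r_add2 tT(1) by blast
next
  fix a x y show "eqm (tensor B (tensor D E)) (frag_of (bm_r B a x, frag_of (y, z))) (frag_of (x, frag_of (bm_l D a y, z)))"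
    using r_bal[of B "tensor D E" a x "frag_of (y, z)"] by simp
next
  fix x y assume "x \<in> bm_null B" then show "eqm (tensor B (tensor D E)) (frag_of (x, frag_of (y, z))) 0" by (rule r_null1)
next
  fix x y assume "y \<in> bm_null D"
  then have "frag_of (y, z) \<in> bm_null (tensor D E)" using r_null1[of y D E z] by (simp add: eqm_def)
  then show "eqm (tensor B (tensor D E)) (frag_of (x, frag_of (y, z))) 0" by (rule r_null2)
qed

lemma asr_bil: "bilinear (tensor (tensor B D) E) (tensor B (tensor D E)) asr"
proof -
  have r: "resp (tensor (tensor B D) E) (tensor B (tensor D E)) asr"
    unfolding asr_def
  proof (rule fe_resp; clarsimp)
    fix x x' y show "eqm (tensor B (tensor D E)) (frag_extend (\<lambda>(x, y'). frag_of (x, frag_of (y', y))) (x + x'))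
          (frag_extend (\<lambda>(x, y'). frag_of (x, frag_of (y', y))) x + frag_extend (\<lambda>(x, y'). frag_of (x, frag_of (y', y))) x')"
      by (simp add: frag_extend_add tT(3))
  next
    fix x y y'
    have "eqm (tensor B (tensor D E)) (frag_extend (\<lambda>(a, b). frag_of (a, frag_of (b, y + y'))) x)
       (frag_extend (\<lambda>k. (\<lambda>(a, b). frag_of (a, frag_of (b, y))) k + (\<lambda>(a, b). frag_of (a, frag_of (b, y'))) k) x)"
    proof (rule eqm_fe; clarsimp)
      fix a b
      have "eqm (tensor B (tensor D E)) (frag_of (a, frag_of (b, y + y'))) (frag_of (a, frag_of (b, y) + frag_of (b, y')))"
        by (intro s2_eq r_add2)
      then show "eqm (tensor B (tensor D E)) (frag_of (a, frag_of (b, y + y'))) (frag_of (a, frag_of (b, y)) + frag_of (a, frag_of (b, y')))"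
        using r_add2 tT(1) by blast
    qed
    then show "eqm (tensor B (tensor D E)) (frag_extend (\<lambda>(x, y'a). frag_of (x, frag_of (y'a, y + y'))) x)
          (frag_extend (\<lambda>(x, y'). frag_of (x, frag_of (y', y))) x + frag_extend (\<lambda>(x, y'a). frag_of (x, frag_of (y'a, y'))) x)"
      by (simp only: fe_plus_fun)
  next
    fix a x y
    show "eqm (tensor B (tensor D E)) (frag_extend (\<lambda>(x, y'). frag_of (x, frag_of (y', y))) (frag_extend (\<lambda>(x, y). frag_of (x, bm_r D a y)) x))
          (frag_extend (\<lambda>(x, y'). frag_of (x, frag_of (y', bm_l E a y))) x)"
      by (simp add: fe_fe case_prod_unfold) (intro eqm_fe s2_eq r_bal)
  next
    fix x y assume "x \<in> zspan (tensor_rels B D)"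
    then have "eqm (tensor B D) x 0" by (simp add: eqm_def)
    then have "eqm (tensor B (tensor D E)) (frag_extend (\<lambda>(x, y'). frag_of (x, frag_of (y', y))) x)
          (frag_extend (\<lambda>(x, y'). frag_of (x, frag_of (y', y))) 0)"
      using asr_inner_resp[of B D E y] unfolding resp_def by blast
    then show "eqm (tensor B (tensor D E)) (frag_extend (\<lambda>(x, y'). frag_of (x, frag_of (y', y))) x) 0" by simp
  next
    fix x y assume "y \<in> bm_null E"
    show "eqm (tensor B (tensor D E)) (frag_extend (\<lambda>(x, y'). frag_of (x, frag_of (y', y))) x) 0"
    proof (rule eqm_fe0; clarsimp)
      fix a b
      have "frag_of (b, y) \<in> bm_null (tensor D E)" using r_null2[OF \<open>y \<in> bm_null E\<close>, of D b] by (simp add: eqm_def)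
      then show "eqm (tensor B (tensor D E)) (frag_of (a, frag_of (b, y))) 0" by (rule r_null2)
    qed
  qed
  show ?thesis using r unfolding bilinear_def resp_def
    by (simp add: fe_simps tT(3))
qed

lemma asl_inner_resp:
  "resp (tensor D E) (tensor (tensor B D) E) (frag_extend (\<lambda>(y, z). frag_of (frag_of (x, y), z)))"
proof (rule fe_resp; clarsimp)
  fix y y' z
  have "eqm (tensor (tensor B D) E) (frag_of (frag_of (x, y + y'), z)) (frag_of (frag_of (x, y) + frag_of (x, y'), z))"
    by (intro s1_eq r_add2)
  then show "eqm (tensor (tensor B D) E) (frag_of (frag_of (x, y + y'), z)) (frag_of (frag_of (x, y), z) + frag_of (frag_of (x, y'), z))"
    using r_add1 tT(1) by blast
next
  fix y z z' show "eqm (tensor (tensor B D) E) (frag_of (frag_of (x, y), z + z')) (frag_of (frag_of (x, y), z) + frag_of (frag_of (x, y), z'))"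
    by (rule r_add2)
next
  fix a y z show "eqm (tensor (tensor B D) E) (frag_of (frag_of (x, bm_r D a y), z)) (frag_of (frag_of (x, y), bm_l E a z))"
    using r_bal[of "tensor B D" E a "frag_of (x, y)" z] by simp
next
  fix y z assume "y \<in> bm_null D"
  then have "frag_of (x, y) \<in> bm_null (tensor B D)" using r_null2[of y D B x] by (simp add: eqm_def)
  then show "eqm (tensor (tensor B D) E) (frag_of (frag_of (x, y), z)) 0" by (rule r_null1)
next
  fix y z assume "z \<in> bm_null E" then show "eqm (tensor (tensor B D) E) (frag_of (frag_of (x, y), z)) 0" by (rule r_null2)
qed

lemma asl_bil: "bilinear (tensor B (tensor D E)) (tensor (tensor B D) E) asl"
proof -
  have r: "resp (tensor B (tensor D E)) (tensor (tensor B D) E) asl"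
    unfolding asl_def
  proof (rule fe_resp; clarsimp)
    fix x x' y
    have "eqm (tensor (tensor B D) E) (frag_extend (\<lambda>(a, b). frag_of (frag_of (x + x', a), b)) y)
       (frag_extend (\<lambda>k. (\<lambda>(a, b). frag_of (frag_of (x, a), b)) k + (\<lambda>(a, b). frag_of (frag_of (x', a), b)) k) y)"
    proof (rule eqm_fe; clarsimp)
      fix a b
      have "eqm (tensor (tensor B D) E) (frag_of (frag_of (x + x', a), b)) (frag_of (frag_of (x, a) + frag_of (x', a), b))"
        by (intro s1_eq r_add1)
      then show "eqm (tensor (tensor B D) E) (frag_of (frag_of (x + x', a), b)) (frag_of (frag_of (x, a), b) + frag_of (frag_of (x', a), b))"
        using r_add1 tT(1) by blast
    qed
    then show "eqm (tensor (tensor B D) E) (frag_extend (\<lambda>(y, z). frag_of (frag_of (x + x', y), z)) y)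
          (frag_extend (\<lambda>(y, z). frag_of (frag_of (x, y), z)) y + frag_extend (\<lambda>(y, z). frag_of (frag_of (x', y), z)) y)"
      by (simp only: fe_plus_fun)
  next
    fix x y y'
    show "eqm (tensor (tensor B D) E) (frag_extend (\<lambda>(y, z). frag_of (frag_of (x, y), z)) (y + y'))
          (frag_extend (\<lambda>(y, z). frag_of (frag_of (x, y), z)) y + frag_extend (\<lambda>(y, z). frag_of (frag_of (x, y), z)) y')"
      by (simp add: frag_extend_add tT(3))
  next
    fix a x y
    show "eqm (tensor (tensor B D) E) (frag_extend (\<lambda>(y, z). frag_of (frag_of (bm_r B a x, y), z)) y)
          (frag_extend (\<lambda>(y, z). frag_of (frag_of (x, y), z)) (frag_extend (\<lambda>(x, y). frag_of (bm_l D a x, y)) y))"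
      by (simp add: fe_fe case_prod_unfold) (intro eqm_fe s1_eq r_bal)
  next
    fix x y assume "x \<in> bm_null B"
    show "eqm (tensor (tensor B D) E) (frag_extend (\<lambda>(y, z). frag_of (frag_of (x, y), z)) y) 0"
    proof (rule eqm_fe0; clarsimp)
      fix a b
      have "frag_of (x, a) \<in> bm_null (tensor B D)" using r_null1[OF \<open>x \<in> bm_null B\<close>, of D a] by (simp add: eqm_def)
      then show "eqm (tensor (tensor B D) E) (frag_of (frag_of (x, a), b)) 0" by (rule r_null1)
    qed
  next
    fix x y assume "y \<in> zspan (tensor_rels D E)"
    then have "eqm (tensor D E) y 0" by (simp add: eqm_def)
    then have "eqm (tensor (tensor B D) E) (frag_extend (\<lambda>(y, z). frag_of (frag_of (x, y), z)) y)
          (frag_extend (\<lambda>(y, z). frag_of (frag_of (x, y), z)) 0)"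
      using asl_inner_resp[of D E B x] unfolding resp_def by blast
    then show "eqm (tensor (tensor B D) E) (frag_extend (\<lambda>(y, z). frag_of (frag_of (x, y), z)) y) 0" by simp
  qed
  show ?thesis using r unfolding bilinear_def resp_def
    by (simp add: fe_simps tT(3))
qed

lemma tmap_cong1: "(\<And>x. eqm B (f x) (f' x)) \<Longrightarrow> eqm (tensor B D) (tmap f g u) (tmap f' g u)"
  unfolding tmap_def by (rule eqm_fe) (auto intro: s1_eq)
lemma tmap_cong2: "(\<And>x. eqm D (g x) (g' x)) \<Longrightarrow> eqm (tensor B D) (tmap f g u) (tmap f g' u)"
  unfolding tmap_def by (rule eqm_fe) (auto intro: s2_eq)

lemma tmap_id[simp]: "tmap id id = id" "tmap (\<lambda>x. x) (\<lambda>x. x) = (\<lambda>x. x)"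
  by (auto simp: fun_eq_iff tmap_def case_prod_unfold)

lemma tmap_comp: "tmap f g (tmap f' g' u) = tmap (f \<circ> f') (g \<circ> g') u"
  by (simp add: fe_simps)

lemma asl_asr: "eqm (tensor (tensor B D) E) (asl (asr u)) u"
proof -
  have "eqm (tensor (tensor B D) E) (frag_extend (\<lambda>k. asl (asr (frag_of k))) u) (frag_extend frag_of u)"
    apply (rule eqm_fe)
    subgoal for k
    proof (cases k)
      case (Pair w z)
      then have "asl (asr (frag_of k)) = frag_extend (\<lambda>k. frag_of (frag_of k, z)) w"
        by (simp add: fe_simps)
      then show ?thesis using s1_fe[of "tensor B D" E frag_of w z] Pair by (simp add: tT(2))
    qed
    done
  moreover have "frag_extend (\<lambda>k. asl (asr (frag_of k))) u = asl (asr u)"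
    by (simp add: fe_simps)
  ultimately show ?thesis by simp
qed

lemma asr_asl: "eqm (tensor B (tensor D E)) (asr (asl u)) u"
proof -
  have "eqm (tensor B (tensor D E)) (frag_extend (\<lambda>k. asr (asl (frag_of k))) u) (frag_extend frag_of u)"
    apply (rule eqm_fe)
    subgoal for k
    proof (cases k)
      case (Pair x w)
      then have "asr (asl (frag_of k)) = frag_extend (\<lambda>k. frag_of (x, frag_of k)) w"
        by (simp add: fe_simps)
      then show ?thesis using s2_fe[of B "tensor D E" x frag_of w] Pair by (simp add: tT(2))
    qed
    done
  moreover have "frag_extend (\<lambda>k. asr (asl (frag_of k))) u = asr (asl u)"
    by (simp add: fe_simps)
  ultimately show ?thesis by simp
qed

lemma zmul_0[simp]: "zmul 0 x = 0" by (simp add: zmul_def)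

lemma zmul_succ: "zmul (n + 1) x = zmul n x + x"
proof (cases "0 \<le> n")
  case True
  then have "nat (n + 1) = Suc (nat n)" by simp
  then show ?thesis using True by (simp add: zmul_def)
next
  case False
  show ?thesis
  proof (cases "n = -1")
    case True then show ?thesis by (simp add: zmul_def)
  next
    case F2: False
    with False have "nat (- n) = Suc (nat (- (n + 1)))" by simp
    then show ?thesis using False F2 by (simp add: zmul_def)
  qed
qed

lemma zmul_pred: "zmul (n - 1) x = zmul n x - x"
proof -
  have "zmul (n - 1 + 1) x = zmul (n - 1) x + x" by (rule zmul_succ)
  then have "zmul n x = zmul (n - 1) x + x" by (simp only: diff_add_cancel)
  then show ?thesis by (simp only: add_diff_cancel)
qed

lemma zmul_add: "zmul (m + n) x = zmul m x + zmul n x"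
proof (induction n rule: int_induct[where k = 0])
  case base then show ?case by simp
next
  case (step1 i)
  have "zmul (m + (i + 1)) x = zmul ((m + i) + 1) x" by (simp only: add.assoc)
  also have "\<dots> = zmul (m + i) x + x" by (rule zmul_succ)
  also have "\<dots> = zmul m x + (zmul i x + x)" using step1.IH by (simp only: add.assoc)
  also have "\<dots> = zmul m x + zmul (i + 1) x" by (simp only: zmul_succ)
  finally show ?case .
next
  case (step2 i)
  have "zmul (m + (i - 1)) x = zmul ((m + i) - 1) x" by (simp only: add_diff_eq)
  also have "\<dots> = zmul (m + i) x - x" by (rule zmul_pred)
  also have "\<dots> = zmul m x + (zmul i x - x)" using step2.IH by (simp only: add_diff_eq)
  also have "\<dots> = zmul m x + zmul (i - 1) x" by (simp only: zmul_pred)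
  finally show ?case .
qed

lemma zmul_1[simp]: "zmul 1 x = x" using zmul_succ[of 0 x] by simp

lemma zmul_uminus: "zmul (- n) x = - zmul n x"
proof -
  have "zmul (n + - n) x = zmul n x + zmul (- n) x" by (rule zmul_add)
  then have "zmul (- n) x + zmul n x = 0" by (simp only: add.right_inverse zmul_0 add.commute)
  then show ?thesis by (simp only: eq_neg_iff_add_eq_0)
qed

lemma gext_superset:
  assumes "finite S" "Poly_Mapping.keys u \<subseteq> S"
  shows "gext f u = (\<Sum>k\<in>S. zmul (Poly_Mapping.lookup u k) (f k))"
  unfolding gext_def
  by (rule sum.mono_neutral_left) (use assms in \<open>auto simp: in_keys_iff\<close>)

lemma gext_add: "gext f (u + v) = gext f u + gext f v"
proof -
  let ?S = "Poly_Mapping.keys u \<union> Poly_Mapping.keys v"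
  have f: "finite ?S" by simp
  have "gext f (u + v) = (\<Sum>k\<in>?S. zmul (Poly_Mapping.lookup (u + v) k) (f k))"
    by (rule gext_superset[OF f]) (rule keys_add)
  also have "\<dots> = (\<Sum>k\<in>?S. zmul (Poly_Mapping.lookup u k) (f k) + zmul (Poly_Mapping.lookup v k) (f k))"
    by (simp only: lookup_add zmul_add)
  also have "\<dots> = (\<Sum>k\<in>?S. zmul (Poly_Mapping.lookup u k) (f k)) + (\<Sum>k\<in>?S. zmul (Poly_Mapping.lookup v k) (f k))"
    by (rule sum.distrib)
  also have "(\<Sum>k\<in>?S. zmul (Poly_Mapping.lookup u k) (f k)) = gext f u"
    by (rule gext_superset[OF f, symmetric]) (rule Un_upper1)
  also have "(\<Sum>k\<in>?S. zmul (Poly_Mapping.lookup v k) (f k)) = gext f v"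
    by (rule gext_superset[OF f, symmetric]) (rule Un_upper2)
  finally show ?thesis .
qed

lemma gext_0[simp]: "gext f 0 = 0" by (simp add: gext_def)

lemma gext_uminus: "gext f (- u) = - gext f u"
proof -
  have "gext f (u + - u) = gext f u + gext f (- u)" by (rule gext_add)
  then have "gext f (- u) + gext f u = 0" by (simp only: add.right_inverse gext_0 add.commute)
  then show ?thesis by (simp only: eq_neg_iff_add_eq_0)
qed

lemma gext_diff: "gext f (u - v) = gext f u - gext f v"
  by (metis diff_conv_add_uminus gext_add gext_uminus)

lemma gext_of[simp]: "gext f (frag_of k) = f k"
  by (simp add: gext_def)

lemma gext_fe: "gext f (frag_extend h u) = gext (\<lambda>k. gext f (h k)) u"
  using subset_UNIV[of "Poly_Mapping.keys u"]
  by (induction u rule: frag_induction) (auto simp: frag_extend_diff gext_diff)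

lemma lunit_of[simp]: "lunit B (frag_of (a, x)) = bm_l B a x" by (simp add: lunit_def)
lemma runit_of[simp]: "runit B (frag_of (x, a)) = bm_r B a x" by (simp add: runit_def)

lemma lunit_tensor: "lunit (tensor B D) u = tmap (lunit B) id (asl u)"
  using subset_UNIV[of "Poly_Mapping.keys u"]
proof (induction u rule: frag_induction)
  case zero then show ?case by (simp add: lunit_def fe_simps)
next
  case (one k) then show ?case by (cases k) (simp add: fe_simps)
next
  case (diff a b) then show ?case by (simp add: lunit_def gext_diff fe_simps)
qed

lemma runit_tensor: "runit (tensor B D) u = tmap id (runit D) (asr u)"
  using subset_UNIV[of "Poly_Mapping.keys u"]
proof (induction u rule: frag_induction)
  case zero then show ?case by (simp add: runit_def fe_simps)
next
  case (one k) then show ?case by (cases k) (simp add: fe_simps)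
next
  case (diff a b) then show ?case by (simp add: runit_def gext_diff fe_simps)
qed

lemma gen2:
  assumes g: "grp X" and F: "addm X F" and G: "addm X G"
    and gen: "\<And>k. eqm X (F (frag_of k)) (G (frag_of k))"
  shows "eqm X (F u) (G u)"
  using subset_UNIV[of "Poly_Mapping.keys u"]
proof (induction u rule: frag_induction)
  case zero then show ?case using addm_zero[OF g F] addm_zero[OF g G] eqm_trans[OF g] eqm_sym[OF g] by blast
next
  case (one x) then show ?case using gen by simp
next
  case (diff a b)
  have Fd: "eqm X (F (a - b)) (F a - F b)"
  proof -
    have "eqm X (F a) (F (a - b) + F b)" using F unfolding addm_def by (metis diff_add_cancel)
    then have "- (F a - (F (a - b) + F b)) \<in> bm_null X" unfolding eqm_def by (rule gneg[OF g])
    moreover have "F (a - b) - (F a - F b) = - (F a - (F (a - b) + F b))" by (simp add: algebra_simps)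
    ultimately show ?thesis unfolding eqm_def by metis
  qed
  have Gd: "eqm X (G (a - b)) (G a - G b)"
  proof -
    have "eqm X (G a) (G (a - b) + G b)" using G unfolding addm_def by (metis diff_add_cancel)
    then have "- (G a - (G (a - b) + G b)) \<in> bm_null X" unfolding eqm_def by (rule gneg[OF g])
    moreover have "G (a - b) - (G a - G b) = - (G a - (G (a - b) + G b))" by (simp add: algebra_simps)
    ultimately show ?thesis unfolding eqm_def by metis
  qed
  have "eqm X (F a - F b) (G a - G b)" using diff eqm_diff[OF g] by blast
  then show ?case using Fd Gd eqm_trans[OF g] eqm_sym[OF g] by blast
qed

lemma gext_addm: "grp X \<Longrightarrow> addm X (gext f)"
  by (simp add: addm_def gext_add eqm_refl)

lemma gext_resp:
  assumes g: "grp X"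
    and a1: "\<And>x x' y. eqm X (\<phi> (x + x', y)) (\<phi> (x, y) + \<phi> (x', y))"
    and a2: "\<And>x y y'. eqm X (\<phi> (x, y + y')) (\<phi> (x, y) + \<phi> (x, y'))"
    and b: "\<And>a x y. eqm X (\<phi> (bm_r B a x, y)) (\<phi> (x, bm_l D a y))"
    and n1: "\<And>x y. x \<in> bm_null B \<Longrightarrow> eqm X (\<phi> (x, y)) 0"
    and n2: "\<And>x y. y \<in> bm_null D \<Longrightarrow> eqm X (\<phi> (x, y)) 0"
  shows "resp (tensor B D) X (gext \<phi>)"
proof -
  have rel: "gext \<phi> s \<in> bm_null X" if "s \<in> tensor_rels B D" for s
  proof -
    from that consider (c1) x x' y where "s = frag_of (x + x', y) - frag_of (x, y) - frag_of (x', y)"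
      | (c2) x y y' where "s = frag_of (x, y + y') - frag_of (x, y) - frag_of (x, y')"
      | (c3) a x y where "s = frag_of (bm_r B a x, y) - frag_of (x, bm_l D a y)"
      | (c4) x y where "s = frag_of (x, y)" "x \<in> bm_null B"
      | (c5) x y where "s = frag_of (x, y)" "y \<in> bm_null D"
      unfolding tensor_rels_def by blast
    then show ?thesis
    proof cases
      case (c1 x x' y)
      then show ?thesis using a1[of x x' y] by (simp add: gext_diff gext_add eqm_def diff_diff_add)
    next
      case (c2 x y y')
      then show ?thesis using a2[of x y y'] by (simp add: gext_diff gext_add eqm_def diff_diff_add)
    next
      case (c3 a x y)
      then show ?thesis using b[of a x y] by (simp add: gext_diff eqm_def)
    next
      case (c4 x y)
      then show ?thesis using n1[where x=x and y=y] by (simp add: eqm_def)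
    next
      case (c5 x y)
      then show ?thesis using n2[where x=x and y=y] by (simp add: eqm_def)
    qed
  qed
  have z: "gext \<phi> u \<in> bm_null X" if "u \<in> zspan (tensor_rels B D)" for u
    using that
  proof (induction u rule: zspan.induct)
    case zspan_0 then show ?case by (simp add: g0[OF g])
  next
    case (zspan_add s w) then show ?case by (simp add: gext_add gadd[OF g] rel)
  next
    case (zspan_diff s w) then show ?case by (simp add: gext_diff gdiff[OF g] rel)
  qed
  show ?thesis unfolding resp_def
  proof (intro allI impI)
    fix u v assume "eqm (tensor B D) u v"
    then have "gext \<phi> (u - v) \<in> bm_null X" by (intro z) (simp add: eqm_def)
    then show "eqm X (gext \<phi> u) (gext \<phi> v)" by (simp add: eqm_def gext_diff)
  qed
qed

context fixes B :: "('a::ring_1, 'x::ab_group_add) bimod" assumes ib: "is_bimod B"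
begin
lemma ib_grp: "grp B" using ib by (rule grp_bimod)
lemmas ibe = eqm_refl[OF ib_grp] eqm_sym[OF ib_grp] eqm_trans[OF ib_grp] eqm_add[OF ib_grp] eqm_diff[OF ib_grp] eqm_uminus[OF ib_grp]
lemma ib_l_resp: "eqm B x y \<Longrightarrow> eqm B (bm_l B a x) (bm_l B a y)" using ib unfolding is_bimod_def by (elim conjE) fast
lemma ib_r_resp: "eqm B x y \<Longrightarrow> eqm B (bm_r B a x) (bm_r B a y)" using ib unfolding is_bimod_def by (elim conjE) fast
lemma ib_l_add: "eqm B (bm_l B a (x + y)) (bm_l B a x + bm_l B a y)" using ib unfolding is_bimod_def by (elim conjE) fast
lemma ib_l_add2: "eqm B (bm_l B (a + b) x) (bm_l B a x + bm_l B b x)" using ib unfolding is_bimod_def by (elim conjE) fast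
lemma ib_l_mult: "eqm B (bm_l B (a * b) x) (bm_l B a (bm_l B b x))" using ib unfolding is_bimod_def by (elim conjE) fast
lemma ib_l_one: "eqm B (bm_l B 1 x) x" using ib unfolding is_bimod_def by (elim conjE) fast
lemma ib_r_add: "eqm B (bm_r B a (x + y)) (bm_r B a x + bm_r B a y)" using ib unfolding is_bimod_def by (elim conjE) fast
lemma ib_r_add2: "eqm B (bm_r B (a + b) x) (bm_r B a x + bm_r B b x)" using ib unfolding is_bimod_def by (elim conjE) fast
lemma ib_r_mult: "eqm B (bm_r B (a * b) x) (bm_r B b (bm_r B a x))" using ib unfolding is_bimod_def by (elim conjE) fast
lemma ib_r_one: "eqm B (bm_r B 1 x) x" using ib unfolding is_bimod_def by (elim conjE) fast
lemma ib_lr: "eqm B (bm_l B a (bm_r B b x)) (bm_r B b (bm_l B a x))" using ib unfolding is_bimod_def by (elim conjE) fast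

lemma ib_l_zero: "eqm B (bm_l B a 0) 0"
proof -
  have "bm_l B a 0 - (bm_l B a 0 + bm_l B a 0) \<in> bm_null B" using ib_l_add[of a 0 0] by (simp add: eqm_def)
  then have "- (bm_l B a 0 - (bm_l B a 0 + bm_l B a 0)) \<in> bm_null B" by (rule gneg[OF ib_grp])
  then show ?thesis by (simp add: eqm_def)
qed
lemma ib_r_zero: "eqm B (bm_r B a 0) 0"
proof -
  have "bm_r B a 0 - (bm_r B a 0 + bm_r B a 0) \<in> bm_null B" using ib_r_add[of a 0 0] by (simp add: eqm_def)
  then have "- (bm_r B a 0 - (bm_r B a 0 + bm_r B a 0)) \<in> bm_null B" by (rule gneg[OF ib_grp])
  then show ?thesis by (simp add: eqm_def)
qed
lemma ib_l_zero2: "eqm B (bm_l B 0 x) 0"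
proof -
  have "bm_l B 0 x - (bm_l B 0 x + bm_l B 0 x) \<in> bm_null B" using ib_l_add2[of 0 0 x] by (simp add: eqm_def)
  then have "- (bm_l B 0 x - (bm_l B 0 x + bm_l B 0 x)) \<in> bm_null B" by (rule gneg[OF ib_grp])
  then show ?thesis by (simp add: eqm_def)
qed
lemma ib_r_zero2: "eqm B (bm_r B 0 x) 0"
proof -
  have "bm_r B 0 x - (bm_r B 0 x + bm_r B 0 x) \<in> bm_null B" using ib_r_add2[of 0 0 x] by (simp add: eqm_def)
  then have "- (bm_r B 0 x - (bm_r B 0 x + bm_r B 0 x)) \<in> bm_null B" by (rule gneg[OF ib_grp])
  then show ?thesis by (simp add: eqm_def)
qed
lemma ib_l_null: "x \<in> bm_null B \<Longrightarrow> eqm B (bm_l B a x) 0"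
proof -
  assume "x \<in> bm_null B"
  then have "eqm B x 0" by (simp add: eqm_def)
  then have "eqm B (bm_l B a x) (bm_l B a 0)" by (rule ib_l_resp)
  then show ?thesis using ib_l_zero ibe(3) by blast
qed
lemma ib_r_null: "x \<in> bm_null B \<Longrightarrow> eqm B (bm_r B a x) 0"
proof -
  assume "x \<in> bm_null B"
  then have "eqm B x 0" by (simp add: eqm_def)
  then have "eqm B (bm_r B a x) (bm_r B a 0)" by (rule ib_r_resp)
  then show ?thesis using ib_r_zero ibe(3) by blast
qed

lemma lunit_bil: "bilinear (tensor ring_bimod B) B (lunit B)"
proof -
  have r: "resp (tensor ring_bimod B) B (lunit B)"
    unfolding lunit_def
  proof (rule gext_resp[OF ib_grp]; clarsimp)
    fix x x' y show "eqm B (bm_l B (x + x') y) (bm_l B x y + bm_l B x' y)" by (rule ib_l_add2)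
  next
    fix x y y' show "eqm B (bm_l B x (y + y')) (bm_l B x y + bm_l B x y')" by (rule ib_l_add)
  next
    fix a x y show "eqm B (bm_l B (bm_r ring_bimod a x) y) (bm_l B x (bm_l B a y))"
      by (simp add: ring_bimod_def ib_l_mult)
  next
    fix x y assume "x \<in> bm_null (ring_bimod :: ('a, 'a) bimod)" then show "eqm B (bm_l B x y) 0"
      by (simp add: ring_bimod_def ib_l_zero2)
  next
    fix x y assume "y \<in> bm_null B" then show "eqm B (bm_l B x y) 0" by (rule ib_l_null)
  qed
  have ad: "addm B (lunit B)" unfolding lunit_def by (rule gext_addm[OF ib_grp])
  have l: "eqm B (lunit B (bm_l (tensor ring_bimod B) a u)) (bm_l B a (lunit B u))" for a u
  proof (rule gen2[OF ib_grp, where F = "\<lambda>u. lunit B (bm_l (tensor ring_bimod B) a u)" and G = "\<lambda>u. bm_l B a (lunit B u)"])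
    show "addm B (\<lambda>u. lunit B (bm_l (tensor ring_bimod B) a u))"
      by (simp add: addm_def lunit_def frag_extend_add gext_add ibe(1))
    show "addm B (\<lambda>u. bm_l B a (lunit B u))"
      unfolding addm_def lunit_def gext_add by (simp add: ib_l_add)
    fix k show "eqm B (lunit B (bm_l (tensor ring_bimod B) a (frag_of k))) (bm_l B a (lunit B (frag_of k)))"
      by (cases k) (simp add: ring_bimod_def ib_l_mult)
  qed
  have rr: "eqm B (lunit B (bm_r (tensor ring_bimod B) a u)) (bm_r B a (lunit B u))" for a u
  proof (rule gen2[OF ib_grp, where F = "\<lambda>u. lunit B (bm_r (tensor ring_bimod B) a u)" and G = "\<lambda>u. bm_r B a (lunit B u)"])
    show "addm B (\<lambda>u. lunit B (bm_r (tensor ring_bimod B) a u))"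
      by (simp add: addm_def lunit_def frag_extend_add gext_add ibe(1))
    show "addm B (\<lambda>u. bm_r B a (lunit B u))"
      unfolding addm_def lunit_def gext_add by (simp add: ib_r_add)
    fix k show "eqm B (lunit B (bm_r (tensor ring_bimod B) a (frag_of k))) (bm_r B a (lunit B (frag_of k)))"
      by (cases k) (simp add: ib_lr)
  qed
  show ?thesis using r ad l rr by (simp add: bilinear_def resp_def addm_def)
qed

lemma runit_bil: "bilinear (tensor B ring_bimod) B (runit B)"
proof -
  have r: "resp (tensor B ring_bimod) B (runit B)"
    unfolding runit_def
  proof (rule gext_resp[OF ib_grp]; clarsimp)
    fix x x' y show "eqm B (bm_r B y (x + x')) (bm_r B y x + bm_r B y x')" by (rule ib_r_add)
  next
    fix x y y' show "eqm B (bm_r B (y + y') x) (bm_r B y x + bm_r B y' x)" by (rule ib_r_add2)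
  next
    fix a x y show "eqm B (bm_r B y (bm_r B a x)) (bm_r B (bm_l ring_bimod a y) x)"
      using ibe(2)[OF ib_r_mult[of a y x]] by (simp add: ring_bimod_def)
  next
    fix x y assume "x \<in> bm_null B" then show "eqm B (bm_r B y x) 0" by (rule ib_r_null)
  next
    fix x y assume "y \<in> bm_null (ring_bimod :: ('a, 'a) bimod)" then show "eqm B (bm_r B y x) 0"
      by (simp add: ring_bimod_def ib_r_zero2)
  qed
  have ad: "addm B (runit B)" unfolding runit_def by (rule gext_addm[OF ib_grp])
  have l: "eqm B (runit B (bm_l (tensor B ring_bimod) a u)) (bm_l B a (runit B u))" for a u
  proof (rule gen2[OF ib_grp, where F = "\<lambda>u. runit B (bm_l (tensor B ring_bimod) a u)" and G = "\<lambda>u. bm_l B a (runit B u)"])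
    show "addm B (\<lambda>u. runit B (bm_l (tensor B ring_bimod) a u))"
      by (simp add: addm_def runit_def frag_extend_add gext_add ibe(1))
    show "addm B (\<lambda>u. bm_l B a (runit B u))"
      unfolding addm_def runit_def gext_add by (simp add: ib_l_add)
    fix k show "eqm B (runit B (bm_l (tensor B ring_bimod) a (frag_of k))) (bm_l B a (runit B (frag_of k)))"
      by (cases k) (simp add: ibe(2)[OF ib_lr])
  qed
  have rr: "eqm B (runit B (bm_r (tensor B ring_bimod) a u)) (bm_r B a (runit B u))" for a u
  proof (rule gen2[OF ib_grp, where F = "\<lambda>u. runit B (bm_r (tensor B ring_bimod) a u)" and G = "\<lambda>u. bm_r B a (runit B u)"])
    show "addm B (\<lambda>u. runit B (bm_r (tensor B ring_bimod) a u))"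
      by (simp add: addm_def runit_def frag_extend_add gext_add ibe(1))
    show "addm B (\<lambda>u. bm_r B a (runit B u))"
      unfolding addm_def runit_def gext_add by (simp add: ib_r_add)
    fix k show "eqm B (runit B (bm_r (tensor B ring_bimod) a (frag_of k))) (bm_r B a (runit B (frag_of k)))"
      by (cases k) (simp add: ring_bimod_def ib_r_mult)
  qed
  show ?thesis using r ad l rr by (simp add: bilinear_def resp_def addm_def)
qed

end

definition fl :: "('x \<Rightarrow> 'r \<Rightarrow>\<^sub>0 int) \<Rightarrow> ('y \<Rightarrow> 's \<Rightarrow>\<^sub>0 int) \<Rightarrow> ('x \<times> 'y \<Rightarrow>\<^sub>0 int) \<Rightarrow> ('r \<times> 's \<Rightarrow>\<^sub>0 int)" where
  "fl f g u = frag_extend (\<lambda>(a, b). frag_extend (\<lambda>r. frag_extend (\<lambda>s. frag_of (r, s)) (g b)) (f a)) u"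

definition good :: "('a, 'x::ab_group_add) bimod \<Rightarrow> ('x \<Rightarrow> 'r \<Rightarrow>\<^sub>0 int) \<Rightarrow> ('r \<Rightarrow> 'x) \<Rightarrow> bool" where
  "good B f F \<longleftrightarrow> (\<forall>a. eqm B a (gext F (f a)))"

lemma good_leaf: "grp B \<Longrightarrow> good B frag_of id"
  by (simp add: good_def eqm_refl)

lemma gext_fe_eq: "gext F u = frag_extend F u"
  using subset_UNIV[of "Poly_Mapping.keys u"]
  by (induction u rule: frag_induction) (auto simp: gext_diff frag_extend_diff)

lemma s1_gext: "eqm (tensor B D) (frag_of (gext F w, y)) (frag_extend (\<lambda>k. frag_of (F k, y)) w)"
  using subset_UNIV[of "Poly_Mapping.keys w"]
proof (induction w rule: frag_induction)
  case zero then show ?case by (simp add: s1_zero)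
next
  case (one x) then show ?case by (simp add: tT(3))
next
  case (diff a b)
  show ?case unfolding frag_extend_diff gext_diff by (rule tT(1)[OF s1_diff tT(5)[OF diff]])
qed

lemma s2_gext: "eqm (tensor B D) (frag_of (x, gext G w)) (frag_extend (\<lambda>k. frag_of (x, G k)) w)"
  using subset_UNIV[of "Poly_Mapping.keys w"]
proof (induction w rule: frag_induction)
  case zero then show ?case by (simp add: s2_zero)
next
  case (one y) then show ?case by (simp add: tT(3))
next
  case (diff a b)
  show ?case unfolding frag_extend_diff gext_diff by (rule tT(1)[OF s2_diff tT(5)[OF diff]])
qed

lemma good_fl:
  assumes f: "good B f F" and g: "good D g G"
  shows "good (tensor B D) (fl f g) (\<lambda>(r, s). frag_of (F r, G s))"
  unfolding good_def
proof
  fix u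
  let ?H = "\<lambda>(r, s). frag_of (F r, G s)"
  show "eqm (tensor B D) u (gext ?H (fl f g u))"
    unfolding gext_fe_eq
    using subset_UNIV[of "Poly_Mapping.keys u"]
  proof (induction u rule: frag_induction)
    case zero then show ?case by (simp add: fl_def tT(3))
  next
    case (one k)
    obtain a b where k: "k = (a, b)" by (cases k)
    have e: "frag_extend ?H (fl f g (frag_of k)) = frag_extend (\<lambda>r. frag_extend (\<lambda>s. frag_of (F r, G s)) (g b)) (f a)"
      by (simp add: fl_def k fe_fe)
    have 1: "eqm (tensor B D) (frag_of (a, b)) (frag_of (gext F (f a), b))"
      using f by (intro s1_eq) (simp add: good_def)
    have 2: "eqm (tensor B D) (frag_of (gext F (f a), b)) (frag_extend (\<lambda>r. frag_of (F r, b)) (f a))"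
      by (rule s1_gext)
    have 3: "eqm (tensor B D) (frag_extend (\<lambda>r. frag_of (F r, b)) (f a)) (frag_extend (\<lambda>r. frag_of (F r, gext G (g b))) (f a))"
      using g by (intro eqm_fe s2_eq) (simp add: good_def)
    have 4: "eqm (tensor B D) (frag_extend (\<lambda>r. frag_of (F r, gext G (g b))) (f a)) (frag_extend (\<lambda>r. frag_extend (\<lambda>s. frag_of (F r, G s)) (g b)) (f a))"
      by (intro eqm_fe s2_gext)
    show ?case unfolding e unfolding k by (rule tT(1)[OF 1 tT(1)[OF 2 tT(1)[OF 3 4]]])
  next
    case (diff a b)
    have "fl f g (a - b) = fl f g a - fl f g b" by (simp add: fl_def frag_extend_diff)
    then show ?case unfolding frag_extend_diff by (simp only: frag_extend_diff) (rule tT(5)[OF diff])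
  qed
qed

lemma fl_inj:
  assumes f: "good B f F" and g: "good D g G" and e: "fl f g u = fl f g v"
  shows "eqm (tensor B D) u v"
proof -
  have "good (tensor B D) (fl f g) (\<lambda>(r, s). frag_of (F r, G s))" by (rule good_fl[OF f g])
  then have h1: "eqm (tensor B D) u (gext (\<lambda>(r, s). frag_of (F r, G s)) (fl f g u))"
    and h2: "eqm (tensor B D) v (gext (\<lambda>(r, s). frag_of (F r, G s)) (fl f g v))"
    by (auto simp: good_def)
  show ?thesis using tT(1)[OF h1[unfolded e] tT(2)[OF h2]] .
qed

lemmas tmap_bil' = tmap_bil[rotated 2]
lemma bil_comp': "bilinear B D f \<Longrightarrow> bilinear D E g \<Longrightarrow> grp E \<Longrightarrow> bilinear B E (g \<circ> f)"
  by (rule bil_comp)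

lemma asl_nat: "tmap (tmap f g) h (asl w) = asl (tmap f (tmap g h) w)"
  by (simp add: fe_simps)
lemma asr_nat: "tmap f (tmap g h) (asr w) = asr (tmap (tmap f g) h w)"
  by (simp add: fe_simps)
lemma asl_nat2: "tmap id h (asl w) = asl (tmap id (tmap id h) w)"
  using asl_nat[of id id h w] by simp

lemma tmap_llin:
  assumes gB: "grp B'" and gD: "grp D'" and f: "bilinear B B' f" and g: "llin D D' g"
  shows "llin (tensor B D) (tensor B' D') (tmap f g)"
proof -
  have r: "resp (tensor B D) (tensor B' D') (tmap f g)"
    by (intro tmap_resp[OF gB gD]) (use f g in \<open>simp_all add: bilinear_iff\<close>)
  have l: "eqm (tensor B' D') (tmap f g (bm_l (tensor B D) a u)) (bm_l (tensor B' D') a (tmap f g u))" for a u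
    unfolding tmap_def by (simp add: fe_fe case_prod_unfold) (intro eqm_fe s1_eq bil_l[OF f])
  show ?thesis using r l unfolding llin_def addm_def
    by (simp add: tmap_def frag_extend_add tT(3))
qed

lemma rt_llin: "llin C (tensor C Y) (\<lambda>c. frag_of (c, t))"
  unfolding llin_def resp_def addm_def
  by (auto intro: s1_eq r_add1 simp: tT(3))

lemma bil_rlin: "bilinear B D f \<Longrightarrow> rlin B D f" by (simp add: bilinear_iff)
lemma bil_llin: "bilinear B D f \<Longrightarrow> llin B D f" by (simp add: bilinear_iff)

lemma tmap_id_comp: "tmap id (g \<circ> g') = tmap id g \<circ> tmap id g'"
  by (rule ext) (simp add: tmap_comp)
lemma tmap_comp_id: "tmap (f \<circ> f') id = tmap f id \<circ> tmap f' id"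
  by (rule ext) (simp add: tmap_comp)

locale cw =
  fixes C :: "('a::ring_1, 'c::ab_group_add) bimod"
    and M :: "('a, 'm::ab_group_add) bimod"
    and \<Delta> :: "'c \<Rightarrow> ('c \<times> 'c \<Rightarrow>\<^sub>0 int)"
    and \<epsilon> :: "'c \<Rightarrow> 'a"
    and mm :: "('c \<times> 'm \<Rightarrow>\<^sub>0 int) \<Rightarrow> ('m \<times> 'c \<Rightarrow>\<^sub>0 int)"
    and \<xi> :: "('c \<times> 'm \<Rightarrow>\<^sub>0 int) \<Rightarrow> 'c"
    and \<delta> :: "('c \<times> 'm \<Rightarrow>\<^sub>0 int) \<Rightarrow> ('c \<times> ('m \<times> 'm \<Rightarrow>\<^sub>0 int) \<Rightarrow>\<^sub>0 int)"
  assumes coring: "is_coring C \<Delta> \<epsilon>"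
    and cow: "is_cowreath C \<Delta> \<epsilon> M mm \<xi> \<delta>"
begin

lemma ibC: "is_bimod C" using coring by (simp add: is_coring_def)
lemma ibM: "is_bimod M" using cow by (simp add: is_cowreath_def in_R_def)
lemma gC: "grp C" by (rule grp_bimod[OF ibC])
lemma gM: "grp M" by (rule grp_bimod[OF ibM])
lemma bD: "bilinear C (tensor C C) \<Delta>" using coring by (simp add: is_coring_def)
lemma bE: "bilinear C ring_bimod \<epsilon>" using coring by (simp add: is_coring_def)
lemma bmm: "bilinear (tensor C M) (tensor M C) mm" using cow by (simp add: is_cowreath_def in_R_def)
lemma bxi: "bilinear (tensor C M) C \<xi>" using cow by (simp add: is_cowreath_def)
lemma bdl: "bilinear (tensor C M) (tensor C (tensor M M)) \<delta>" using cow by (simp add: is_cowreath_def)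

lemma h_coass: "eqm (tensor C (tensor C C)) (asr (tmap \<Delta> id (\<Delta> c))) (tmap id \<Delta> (\<Delta> c))"
  using coring by (simp add: is_coring_def mapeq_def)
lemma h_cl: "eqm C (lunit C (tmap \<epsilon> id (\<Delta> c))) c"
  using coring by (simp add: is_coring_def mapeq_def)
lemma h_cr: "eqm C (runit C (tmap id \<epsilon> (\<Delta> c))) c"
  using coring by (simp add: is_coring_def mapeq_def)
lemma h_R1: "eqm (tensor (tensor M C) C) (asl (tmap id \<Delta> (mm x))) (tmap mm id (asl (tmap id mm (asr (tmap \<Delta> id x)))))"
  using cow by (simp add: is_cowreath_def in_R_def mapeq_def)
lemma h_R2: "eqm M (runit M (tmap id \<epsilon> (mm x))) (lunit M (tmap \<epsilon> id x))"
  using cow by (simp add: is_cowreath_def in_R_def mapeq_def)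
lemma h_xil: "eqm (tensor C C) (\<Delta> (\<xi> x)) (tmap id \<xi> (asr (tmap \<Delta> id x)))"
  using cow by (simp add: is_cowreath_def mapeq_def cm_lco_def)
lemma h_xir: "eqm (tensor C C) (\<Delta> (\<xi> x)) (tmap \<xi> id (asl (tmap id mm (asr (tmap \<Delta> id x)))))"
  using cow by (simp add: is_cowreath_def mapeq_def cm_rco_def)
lemma h_dl: "eqm (tensor C (tensor C (tensor M M))) (asr (tmap \<Delta> id (\<delta> x))) (tmap id \<delta> (asr (tmap \<Delta> id x)))"
  using cow by (simp add: is_cowreath_def mapeq_def cm_lco_def)
lemma h_dr: "eqm (tensor (tensor C (tensor M M)) C) (cmm_rco \<Delta> mm (\<delta> x)) (tmap \<delta> id (cm_rco \<Delta> mm x))"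
  using cow by (simp add: is_cowreath_def mapeq_def)
lemma h_dc1: "eqm (tensor C M) (tmap \<xi> id (asl (\<delta> x))) x"
  using cow by (simp add: is_cowreath_def mapeq_def)
lemma h_dc2: "eqm (tensor M C) (tmap id \<xi> (asr (tmap mm id (asl (\<delta> x))))) (mm x)"
  using cow by (simp add: is_cowreath_def mapeq_def)
lemma h_dco: "eqm (tensor M (tensor C (tensor M M)))
   (asr (tmap mm id (asl (tmap id asr (asr (tmap \<delta> id (asl (\<delta> x))))))))
   (tmap id \<delta> (asr (tmap mm id (asl (\<delta> x)))))"
  using cow by (simp add: is_cowreath_def mapeq_def)

lemma gl_C: "good C frag_of id" by (rule good_leaf[OF gC])
lemma gl_M: "good M frag_of id" by (rule good_leaf[OF gM])

end

definition LD :: "('c \<Rightarrow> ('c \<times> 'c \<Rightarrow>\<^sub>0 int)) \<Rightarrow> ('c \<times> 'y \<Rightarrow>\<^sub>0 int) \<Rightarrow> ('c \<times> ('c \<times> 'y \<Rightarrow>\<^sub>0 int) \<Rightarrow>\<^sub>0 int)" where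
  "LD D = asr \<circ> tmap D id"
definition QQ :: "(('c \<times> 'm \<Rightarrow>\<^sub>0 int) \<Rightarrow> ('m \<times> 'c \<Rightarrow>\<^sub>0 int)) \<Rightarrow> ('c \<times> ('m \<times> 'y \<Rightarrow>\<^sub>0 int) \<Rightarrow>\<^sub>0 int) \<Rightarrow> ('m \<times> ('c \<times> 'y \<Rightarrow>\<^sub>0 int) \<Rightarrow>\<^sub>0 int)" where
  "QQ m = asr \<circ> tmap m id \<circ> asl"
definition WW :: "(('c \<times> 'm \<Rightarrow>\<^sub>0 int) \<Rightarrow> ('c \<times> ('m \<times> 'm \<Rightarrow>\<^sub>0 int) \<Rightarrow>\<^sub>0 int)) \<Rightarrow> ('c \<times> ('m \<times> 'y \<Rightarrow>\<^sub>0 int) \<Rightarrow>\<^sub>0 int) \<Rightarrow> ('c \<times> ('m \<times> ('m \<times> 'y \<Rightarrow>\<^sub>0 int) \<Rightarrow>\<^sub>0 int) \<Rightarrow>\<^sub>0 int)" where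
  "WW d = tmap id asr \<circ> asr \<circ> tmap d id \<circ> asl"

lemmas defs_all = LD_def QQ_def WW_def cw_comult_def

lemmas bil_intros = bil_comp' tmap_bil' asr_bil asl_bil bil_id grp_tensor grp_ring

context cw begin

lemmas bil_atoms = bD bE bmm bxi bdl gC gM

lemma bLD: "grp Y \<Longrightarrow> bilinear (tensor C Y) (tensor C (tensor C Y)) (LD \<Delta>)"
  unfolding LD_def by ((rule bil_intros bil_atoms | assumption)+)
lemma bQQ: "grp Y \<Longrightarrow> bilinear (tensor C (tensor M Y)) (tensor M (tensor C Y)) (QQ mm)"
  unfolding QQ_def by ((rule bil_intros bil_atoms | assumption)+)
lemma bWW: "grp Y \<Longrightarrow> bilinear (tensor C (tensor M Y)) (tensor C (tensor M (tensor M Y))) (WW \<delta>)"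
  unfolding WW_def by ((rule bil_intros bil_atoms | assumption)+)
lemma bD': "bilinear (tensor C M) (tensor (tensor C M) (tensor C M)) (cw_comult \<Delta> mm \<delta>)"
  unfolding cw_comult_def by ((rule bil_intros bil_atoms | assumption)+)

lemma D'_eq: "cw_comult \<Delta> mm \<delta> x = asl (tmap id (QQ mm) (tmap id \<delta> (LD \<Delta> x)))"
  by (simp add: defs_all)


lemmas tTr = tT(1)
lemmas tTs = tT(2)

lemma E1: "eqm (tensor (tensor C M) (tensor C M)) (cw_comult \<Delta> mm \<delta> x) (asl (tmap id (QQ mm) (LD \<Delta> (\<delta> x))))"
proof -
  have b: "bilinear (tensor C (tensor C (tensor M M))) (tensor (tensor C M) (tensor C M)) (asl \<circ> tmap id (QQ mm))"
    by ((rule bil_intros bil_atoms bQQ | assumption)+)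
  have "eqm (tensor C (tensor C (tensor M M))) (tmap id \<delta> (LD \<Delta> x)) (LD \<Delta> (\<delta> x))"
    using h_dl by (simp add: LD_def tTs)
  from bil_resp[OF b this] show ?thesis by (simp add: D'_eq)
qed

lemma X2: "eqm (tensor (tensor C C) M)
   (asl (tmap \<xi> id (asl (tmap id (QQ mm) (LD \<Delta> y)))))
   (tmap (tmap \<xi> id \<circ> asl \<circ> tmap id mm \<circ> LD \<Delta>) id (asl y))"
  apply (rule fl_inj[OF good_fl[OF gl_C gl_C] gl_M])
  apply (simp add: fe_simps fl_def defs_all)
  apply (subst fe_swap)
  apply (rule refl)
  done

lemma Xc: "eqm (tensor (tensor C C) M) (asl (tmap \<xi> id (cw_comult \<Delta> mm \<delta> x))) (tmap \<Delta> id x)"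
proof -
  have b: "bilinear (tensor (tensor C M) (tensor C M)) (tensor (tensor C C) M) (asl \<circ> tmap \<xi> id)"
    by ((rule bil_intros bil_atoms | assumption)+)
  have 1: "eqm (tensor (tensor C C) M) (asl (tmap \<xi> id (cw_comult \<Delta> mm \<delta> x))) (asl (tmap \<xi> id (asl (tmap id (QQ mm) (LD \<Delta> (\<delta> x))))))"
    using bil_resp[OF b E1] by simp
  have 3: "eqm (tensor (tensor C C) M) (tmap (tmap \<xi> id \<circ> asl \<circ> tmap id mm \<circ> LD \<Delta>) id (asl (\<delta> x))) (tmap (\<Delta> \<circ> \<xi>) id (asl (\<delta> x)))"
    by (rule tmap_cong1) (use h_xir in \<open>simp add: LD_def tT(2)\<close>)
  have b2: "bilinear (tensor C M) (tensor (tensor C C) M) (tmap \<Delta> id)"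
    by ((rule bil_intros bil_atoms | assumption)+)
  have 5: "eqm (tensor (tensor C C) M) (tmap \<Delta> id (tmap \<xi> id (asl (\<delta> x)))) (tmap \<Delta> id x)"
    by (rule bil_resp[OF b2 h_dc1])
  have 4: "tmap (\<Delta> \<circ> \<xi>) id (asl (\<delta> x)) = tmap \<Delta> id (tmap \<xi> id (asl (\<delta> x)))"
    by (simp add: tmap_comp)
  show ?thesis using tTr[OF 1 tTr[OF X2 tTr[OF 3 5[folded 4]]]] .
qed


lemma morph: "eqm (tensor C C) (tmap \<xi> \<xi> (cw_comult \<Delta> mm \<delta> x)) (\<Delta> (\<xi> x))"
proof -
  have 0: "tmap \<xi> \<xi> (cw_comult \<Delta> mm \<delta> x) = tmap id \<xi> (tmap \<xi> id (cw_comult \<Delta> mm \<delta> x))"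
    by (simp add: tmap_comp)
  have 1: "eqm (tensor C (tensor C M)) (tmap \<xi> id (cw_comult \<Delta> mm \<delta> x)) (asr (asl (tmap \<xi> id (cw_comult \<Delta> mm \<delta> x))))"
    by (rule tTs[OF asr_asl])
  have 2: "eqm (tensor C (tensor C M)) (asr (asl (tmap \<xi> id (cw_comult \<Delta> mm \<delta> x)))) (asr (tmap \<Delta> id x))"
    by (rule bil_resp[OF asr_bil Xc])
  have b: "bilinear (tensor C (tensor C M)) (tensor C C) (tmap id \<xi>)"
    by ((rule bil_intros bil_atoms | assumption)+)
  have 3: "eqm (tensor C C) (tmap id \<xi> (tmap \<xi> id (cw_comult \<Delta> mm \<delta> x))) (tmap id \<xi> (asr (tmap \<Delta> id x)))"
    by (rule bil_resp[OF b tTr[OF 1 2]])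
  show ?thesis unfolding 0 using tTr[OF 3 tTs[OF h_xil]] .
qed

lemma lcounit: "eqm (tensor C M) (lunit (tensor C M) (tmap (\<epsilon> \<circ> \<xi>) id (cw_comult \<Delta> mm \<delta> x))) x"
proof -
  have 0: "lunit (tensor C M) (tmap (\<epsilon> \<circ> \<xi>) id w) = tmap (lunit C \<circ> tmap \<epsilon> id) id (asl (tmap \<xi> id w))" for w
    by (simp add: lunit_tensor fe_simps)
  have b: "bilinear (tensor (tensor C C) M) (tensor C M) (tmap (lunit C \<circ> tmap \<epsilon> id) id)"
    by ((rule bil_intros bil_atoms lunit_bil[OF ibC] | assumption)+)
  have 1: "eqm (tensor C M) (tmap (lunit C \<circ> tmap \<epsilon> id) id (asl (tmap \<xi> id (cw_comult \<Delta> mm \<delta> x)))) (tmap (lunit C \<circ> tmap \<epsilon> id) id (tmap \<Delta> id x))"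
    by (rule bil_resp[OF b Xc])
  have 2: "tmap (lunit C \<circ> tmap \<epsilon> id) id (tmap \<Delta> id x) = tmap (lunit C \<circ> tmap \<epsilon> id \<circ> \<Delta>) id x"
    by (simp add: tmap_comp comp_assoc)
  have 3: "eqm (tensor C M) (tmap (lunit C \<circ> tmap \<epsilon> id \<circ> \<Delta>) id x) (tmap id id x)"
    by (rule tmap_cong1) (simp add: h_cl)
  show ?thesis unfolding 0 using tTr[OF 1 3[folded 2]] by simp
qed

lemma rcounit: "eqm (tensor C M) (runit (tensor C M) (tmap id (\<epsilon> \<circ> \<xi>) (cw_comult \<Delta> mm \<delta> x))) x"
proof -
  define V where "V = tmap id (QQ mm) (tmap id \<delta> (LD \<Delta> x))"
  have 0: "runit (tensor C M) (tmap id (\<epsilon> \<circ> \<xi>) (cw_comult \<Delta> mm \<delta> x)) = tmap id (runit M) (asr (asl (tmap id (tmap id (\<epsilon> \<circ> \<xi>)) V)))"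
    unfolding D'_eq V_def runit_tensor asl_nat2 ..
  have b: "bilinear (tensor C (tensor M ring_bimod)) (tensor C M) (tmap id (runit M))"
    by ((rule bil_intros bil_atoms runit_bil[OF ibM] | assumption)+)
  have 2: "eqm (tensor C M) (tmap id (runit M) (asr (asl (tmap id (tmap id (\<epsilon> \<circ> \<xi>)) V)))) (tmap id (runit M) (tmap id (tmap id (\<epsilon> \<circ> \<xi>)) V))"
    by (rule bil_resp[OF b asr_asl])
  have 3: "tmap id (runit M) (tmap id (tmap id (\<epsilon> \<circ> \<xi>)) V) = tmap id (runit M \<circ> tmap id (\<epsilon> \<circ> \<xi>) \<circ> QQ mm \<circ> \<delta>) (LD \<Delta> x)"
    unfolding V_def by (simp add: tmap_comp comp_assoc)
  have bR: "bilinear (tensor M C) M (runit M \<circ> tmap id \<epsilon>)"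
    by ((rule bil_intros bil_atoms runit_bil[OF ibM] | assumption)+)
  have 4: "eqm M ((runit M \<circ> tmap id (\<epsilon> \<circ> \<xi>) \<circ> QQ mm \<circ> \<delta>) z) ((lunit M \<circ> tmap \<epsilon> id) z)" for z
  proof -
    have e: "(runit M \<circ> tmap id (\<epsilon> \<circ> \<xi>) \<circ> QQ mm \<circ> \<delta>) z = (runit M \<circ> tmap id \<epsilon>) (tmap id \<xi> (asr (tmap mm id (asl (\<delta> z)))))"
      by (simp add: tmap_comp QQ_def)
    have "eqm M ((runit M \<circ> tmap id \<epsilon>) (tmap id \<xi> (asr (tmap mm id (asl (\<delta> z)))))) ((runit M \<circ> tmap id \<epsilon>) (mm z))"
      by (rule bil_resp[OF bR h_dc2])
    then show ?thesis unfolding e using eqm_trans[OF gM] h_R2 by simp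
  qed
  have 5: "eqm (tensor C M) (tmap id (runit M \<circ> tmap id (\<epsilon> \<circ> \<xi>) \<circ> QQ mm \<circ> \<delta>) (LD \<Delta> x)) (tmap id (lunit M \<circ> tmap \<epsilon> id) (LD \<Delta> x))"
    by (rule tmap_cong2[OF 4])
  have 6: "eqm (tensor C M) (tmap id (lunit M \<circ> tmap \<epsilon> id) (LD \<Delta> x)) (id x)"
  proof (rule gen2[OF grp_tensor, where F = "\<lambda>x. tmap id (lunit M \<circ> tmap \<epsilon> id) (LD \<Delta> x)" and G = id])
    show "addm (tensor C M) (\<lambda>x. tmap id (lunit M \<circ> tmap \<epsilon> id) (LD \<Delta> x))"
      by (simp add: addm_def LD_def fe_simps tT(3))
    show "addm (tensor C M) id" by (simp add: addm_def tT(3))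
    fix k :: "'c \<times> 'm"
    obtain c m where k: "k = (c, m)" by (cases k)
    have e1: "tmap id (lunit M \<circ> tmap \<epsilon> id) (LD \<Delta> (frag_of k)) = frag_extend (\<lambda>k. frag_of (fst k, bm_l M (\<epsilon> (snd k)) m)) (\<Delta> c)"
      by (simp add: k LD_def fe_simps)
    have e2: "runit C (tmap id \<epsilon> (\<Delta> c)) = gext (\<lambda>k. bm_r C (\<epsilon> (snd k)) (fst k)) (\<Delta> c)"
      by (simp add: runit_def tmap_def gext_fe case_prod_unfold)
    have a1: "eqm (tensor C M) (frag_of (c, m)) (frag_of (runit C (tmap id \<epsilon> (\<Delta> c)), m))"
      by (rule s1_eq) (rule eqm_sym[OF gC h_cr])
    have a2: "eqm (tensor C M) (frag_of (gext (\<lambda>k. bm_r C (\<epsilon> (snd k)) (fst k)) (\<Delta> c), m)) (frag_extend (\<lambda>k. frag_of (bm_r C (\<epsilon> (snd k)) (fst k), m)) (\<Delta> c))"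
      by (rule s1_gext)
    have a3: "eqm (tensor C M) (frag_extend (\<lambda>k. frag_of (bm_r C (\<epsilon> (snd k)) (fst k), m)) (\<Delta> c)) (frag_extend (\<lambda>k. frag_of (fst k, bm_l M (\<epsilon> (snd k)) m)) (\<Delta> c))"
      by (intro eqm_fe r_bal)
    show "eqm (tensor C M) (tmap id (lunit M \<circ> tmap \<epsilon> id) (LD \<Delta> (frag_of k))) (id (frag_of k))"
      unfolding e1 using tTs[OF tTr[OF a1[unfolded e2] tTr[OF a2 a3]]] by (simp add: k)
  qed
  show ?thesis unfolding 0 using tTr[OF 2 tTr[OF 5[folded 3] 6]] by simp
qed


lemma R1': "eqm (tensor M (tensor C C)) (tmap id \<Delta> (mm z)) (QQ mm (tmap id mm (LD \<Delta> z)))"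
proof -
  have "eqm (tensor M (tensor C C)) (asr (asl (tmap id \<Delta> (mm z)))) (asr (tmap mm id (asl (tmap id mm (asr (tmap \<Delta> id z))))))"
    by (rule bil_resp[OF asr_bil h_R1])
  then show ?thesis using tTr[OF tTs[OF asr_asl]] by (simp add: QQ_def LD_def)
qed

lemma dr': "eqm (tensor C (tensor M (tensor M C))) (tmap id (tmap id mm \<circ> QQ mm) (LD \<Delta> (\<delta> z))) (WW \<delta> (tmap id mm (LD \<Delta> z)))"
proof -
  have bF: "bilinear (tensor (tensor C (tensor M M)) C) (tensor C (tensor M (tensor M C))) (tmap id asr \<circ> asr)"
    by ((rule bil_intros bil_atoms | assumption)+)
  define V where "V = tmap id (tmap id mm) (tmap id (QQ mm) (LD \<Delta> (\<delta> z)))"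
  have 1: "eqm (tensor C (tensor M (tensor M C))) ((tmap id asr \<circ> asr) (cmm_rco \<Delta> mm (\<delta> z))) ((tmap id asr \<circ> asr) (tmap \<delta> id (cm_rco \<Delta> mm z)))"
    by (rule bil_resp[OF bF h_dr])
  have e1: "(tmap id asr \<circ> asr) (tmap \<delta> id (cm_rco \<Delta> mm z)) = WW \<delta> (tmap id mm (LD \<Delta> z))"
    by (simp add: cm_rco_def WW_def LD_def)
  have e2: "(tmap id asr \<circ> asr) (cmm_rco \<Delta> mm (\<delta> z)) = tmap id asr (asr (asl (tmap id asl V)))"
    by (simp add: cmm_rco_def V_def QQ_def LD_def)
  have b2: "bilinear (tensor C (tensor (tensor M M) C)) (tensor C (tensor M (tensor M C))) (tmap id asr)"
    by ((rule bil_intros bil_atoms | assumption)+)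
  have 2: "eqm (tensor C (tensor M (tensor M C))) (tmap id asr (asr (asl (tmap id asl V)))) (tmap id asr (tmap id asl V))"
    by (rule bil_resp[OF b2 asr_asl])
  have 3: "eqm (tensor C (tensor M (tensor M C))) (tmap id asr (tmap id asl V)) (tmap id id V)"
  proof -
    have "tmap id asr (tmap id asl V) = tmap id (asr \<circ> asl) V" by (simp add: tmap_comp)
    moreover have "eqm (tensor C (tensor M (tensor M C))) (tmap id (asr \<circ> asl) V) (tmap id id V)"
      by (rule tmap_cong2) (simp add: asr_asl)
    ultimately show ?thesis by simp
  qed
  have e3: "V = tmap id (tmap id mm \<circ> QQ mm) (LD \<Delta> (\<delta> z))" by (simp add: V_def tmap_comp)
  show ?thesis using tTr[OF tTs[OF tTr[OF 2 3]] 1[unfolded e2]] unfolding e1 e3 by simp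
qed

lemma LDLD:
  fixes Y :: "('a, 'y::ab_group_add) bimod"
  shows "eqm (tensor C (tensor C (tensor C Y))) (LD \<Delta> (LD \<Delta> x)) (tmap id (LD \<Delta>) (LD \<Delta> x))"
proof (rule gen2[OF grp_tensor, where F = "\<lambda>x. LD \<Delta> (LD \<Delta> x)" and G = "\<lambda>x. tmap id (LD \<Delta>) (LD \<Delta> x)"])
  show "addm (tensor C (tensor C (tensor C Y))) (\<lambda>x. LD \<Delta> (LD \<Delta> x))"
    by (simp add: addm_def LD_def fe_simps tT(3))
  show "addm (tensor C (tensor C (tensor C Y))) (\<lambda>x. tmap id (LD \<Delta>) (LD \<Delta> x))"
    by (simp add: addm_def LD_def fe_simps tT(3))
  fix k :: "'c \<times> 'y"
  obtain c t where k: "k = (c, t)" by (cases k)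
  have e1: "LD \<Delta> (LD \<Delta> (frag_of k)) = tmap id (tmap id (\<lambda>c. frag_of (c, t))) (asr (tmap \<Delta> id (\<Delta> c)))"
    by (simp add: k LD_def fe_simps)
  have e2: "tmap id (LD \<Delta>) (LD \<Delta> (frag_of k)) = tmap id (tmap id (\<lambda>c. frag_of (c, t))) (tmap id \<Delta> (\<Delta> c))"
    by (simp add: k LD_def fe_simps)
  have l1: "llin (tensor C C) (tensor C (tensor C Y)) (tmap id (\<lambda>c. frag_of (c, t)))"
    by (rule tmap_llin[OF gC grp_tensor bil_id[OF gC] rt_llin])
  have r: "resp (tensor C (tensor C C)) (tensor C (tensor C (tensor C Y))) (tmap id (tmap id (\<lambda>c. frag_of (c, t))))"
    by (rule tmap_resp[OF gC grp_tensor bil_rlin[OF bil_id[OF gC]] l1])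
  show "eqm (tensor C (tensor C (tensor C Y))) (LD \<Delta> (LD \<Delta> (frag_of k))) (tmap id (LD \<Delta>) (LD \<Delta> (frag_of k)))"
    unfolding e1 e2 using r h_coass by (simp add: resp_def)
qed


lemma bE1: "bilinear (tensor C (tensor M M)) (tensor (tensor C M) (tensor C M)) (asl \<circ> tmap id (QQ mm) \<circ> LD \<Delta>)"
  by ((rule bil_intros bil_atoms bLD bQQ | assumption)+)

lemma RHS: "eqm (tensor (tensor C M) (tensor (tensor C M) (tensor C M)))
  (tmap id (cw_comult \<Delta> mm \<delta>) (cw_comult \<Delta> mm \<delta> x))
  (asl (tmap id (tmap id (asl \<circ> tmap id (QQ mm)) \<circ> tmap id asr \<circ> asr \<circ> tmap (QQ mm \<circ> tmap id mm \<circ> LD \<Delta>) id \<circ> asl \<circ> WW \<delta>) (LD \<Delta> (\<delta> x))))"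
  (is "eqm ?T _ _")
proof -
  let ?D' = "cw_comult \<Delta> mm \<delta>"
  let ?E1 = "asl \<circ> tmap id (QQ mm) \<circ> LD \<Delta>"
  have b0: "bilinear (tensor (tensor C M) (tensor C M)) ?T (tmap id ?D')"
    by ((rule bil_intros bil_atoms bD' | assumption)+)
  have r1: "eqm ?T (tmap id ?D' (?D' x)) (tmap id ?D' (asl (tmap id (QQ mm) (LD \<Delta> (\<delta> x)))))"
    by (rule bil_resp[OF b0 E1])
  have r2: "eqm ?T (tmap id ?D' (asl (tmap id (QQ mm) (LD \<Delta> (\<delta> x))))) (tmap id (?E1 \<circ> \<delta>) (asl (tmap id (QQ mm) (LD \<Delta> (\<delta> x)))))"
    by (rule tmap_cong2) (simp add: E1)
  have e3: "tmap id (?E1 \<circ> \<delta>) (asl (tmap id (QQ mm) (LD \<Delta> (\<delta> x)))) = asl (tmap id (tmap id (?E1 \<circ> \<delta>) \<circ> QQ mm) (LD \<Delta> (\<delta> x)))"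
    by (simp add: asl_nat2 tmap_comp)
  have b4: "bilinear (tensor C (tensor C (tensor M M))) ?T (asl \<circ> tmap id (tmap id (?E1 \<circ> \<delta>) \<circ> QQ mm))"
    by ((rule bil_intros bil_atoms bLD bQQ | assumption)+)
  have r4: "eqm ?T (asl (tmap id (tmap id (?E1 \<circ> \<delta>) \<circ> QQ mm) (LD \<Delta> (\<delta> x)))) (asl (tmap id (tmap id (?E1 \<circ> \<delta>) \<circ> QQ mm) (tmap id \<delta> (LD \<Delta> x))))"
    using bil_resp[OF b4 h_dl] by (simp add: LD_def)
  have e5: "asl (tmap id (tmap id (?E1 \<circ> \<delta>) \<circ> QQ mm) (tmap id \<delta> (LD \<Delta> x))) = asl (tmap id (tmap id ?E1 \<circ> (tmap id \<delta> \<circ> QQ mm \<circ> \<delta>)) (LD \<Delta> x))"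
    by (simp only: tmap_id_comp comp_assoc comp_apply)
  have bb: "bilinear (tensor M (tensor C (tensor M M))) (tensor M (tensor (tensor C M) (tensor C M))) (tmap id ?E1)"
    by ((rule bil_intros bil_atoms bLD bQQ | assumption)+)
  have p6: "eqm (tensor M (tensor (tensor C M) (tensor C M))) ((tmap id ?E1 \<circ> (tmap id \<delta> \<circ> QQ mm \<circ> \<delta>)) z) ((tmap id ?E1 \<circ> (QQ mm \<circ> WW \<delta> \<circ> \<delta>)) z)" for z
    using bil_resp[OF bb tTs[OF h_dco]] by (simp add: QQ_def WW_def)
  have r6: "eqm ?T (asl (tmap id (tmap id ?E1 \<circ> (tmap id \<delta> \<circ> QQ mm \<circ> \<delta>)) (LD \<Delta> x))) (asl (tmap id (tmap id ?E1 \<circ> (QQ mm \<circ> WW \<delta> \<circ> \<delta>)) (LD \<Delta> x)))"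
    by (rule bil_resp[OF asl_bil tmap_cong2[OF p6]])
  have e7: "asl (tmap id (tmap id ?E1 \<circ> (QQ mm \<circ> WW \<delta> \<circ> \<delta>)) (LD \<Delta> x)) = asl (tmap id (tmap id ?E1 \<circ> QQ mm \<circ> WW \<delta>) (tmap id \<delta> (LD \<Delta> x)))"
    by (simp add: tmap_comp comp_assoc)
  have b8: "bilinear (tensor C (tensor C (tensor M M))) ?T (asl \<circ> tmap id (tmap id ?E1 \<circ> QQ mm \<circ> WW \<delta>))"
    by ((rule bil_intros bil_atoms bLD bQQ bWW | assumption)+)
  have r8: "eqm ?T (asl (tmap id (tmap id ?E1 \<circ> QQ mm \<circ> WW \<delta>) (tmap id \<delta> (LD \<Delta> x)))) (asl (tmap id (tmap id ?E1 \<circ> QQ mm \<circ> WW \<delta>) (LD \<Delta> (\<delta> x))))"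
    using bil_resp[OF b8 tTs[OF h_dl]] by (simp add: LD_def)
  have e9: "tmap id ?E1 \<circ> QQ mm \<circ> WW \<delta> = tmap id (asl \<circ> tmap id (QQ mm)) \<circ> tmap id asr \<circ> asr \<circ> tmap (tmap id \<Delta> \<circ> mm) id \<circ> asl \<circ> WW \<delta>"
  proof (rule ext)
    fix z
    show "(tmap id ?E1 \<circ> QQ mm \<circ> WW \<delta>) z = (tmap id (asl \<circ> tmap id (QQ mm)) \<circ> tmap id asr \<circ> asr \<circ> tmap (tmap id \<Delta> \<circ> mm) id \<circ> asl \<circ> WW \<delta>) z"
      by (simp only: comp_apply) (simp add: fe_simps LD_def QQ_def)
  qed
  have bK: "bilinear (tensor (tensor M (tensor C C)) (tensor M M)) (tensor M (tensor (tensor C M) (tensor C M))) (tmap id (asl \<circ> tmap id (QQ mm)) \<circ> tmap id asr \<circ> asr)"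
    by ((rule bil_intros bil_atoms bLD bQQ | assumption)+)
  have p10: "eqm (tensor M (tensor (tensor C M) (tensor C M)))
     ((tmap id (asl \<circ> tmap id (QQ mm)) \<circ> tmap id asr \<circ> asr \<circ> tmap (tmap id \<Delta> \<circ> mm) id \<circ> asl \<circ> WW \<delta>) z)
     ((tmap id (asl \<circ> tmap id (QQ mm)) \<circ> tmap id asr \<circ> asr \<circ> tmap (QQ mm \<circ> tmap id mm \<circ> LD \<Delta>) id \<circ> asl \<circ> WW \<delta>) z)" for z
    using bil_resp[OF bK tmap_cong1[of "tensor M (tensor C C)" "tmap id \<Delta> \<circ> mm" "QQ mm \<circ> tmap id mm \<circ> LD \<Delta>"]] R1' by simp
  have r10: "eqm ?T (asl (tmap id (tmap id (asl \<circ> tmap id (QQ mm)) \<circ> tmap id asr \<circ> asr \<circ> tmap (tmap id \<Delta> \<circ> mm) id \<circ> asl \<circ> WW \<delta>) (LD \<Delta> (\<delta> x))))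
      (asl (tmap id (tmap id (asl \<circ> tmap id (QQ mm)) \<circ> tmap id asr \<circ> asr \<circ> tmap (QQ mm \<circ> tmap id mm \<circ> LD \<Delta>) id \<circ> asl \<circ> WW \<delta>) (LD \<Delta> (\<delta> x))))"
    by (rule bil_resp[OF asl_bil tmap_cong2[OF p10]])
  show ?thesis
    using tTr[OF r1 tTr[OF r2 tTr[OF r4[folded e3] tTr[OF r6[folded e5] tTr[OF r8[folded e7] r10[folded e9]]]]]] .
qed


lemma gT: "good (tensor (tensor C M) (tensor (tensor C M) (tensor C M)))
   (fl (fl frag_of frag_of) (fl (fl frag_of frag_of) (fl frag_of frag_of)))
   (\<lambda>(r, s). frag_of ((\<lambda>(r, s). frag_of (id r, id s)) r, (\<lambda>(r, s). frag_of ((\<lambda>(r, s). frag_of (id r, id s)) r, (\<lambda>(r, s). frag_of (id r, id s)) s)) s))"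
  by (intro good_fl gl_C gl_M)

lemma flatL: "eqm (tensor (tensor C M) (tensor (tensor C M) (tensor C M)))
  (asr (tmap (asl \<circ> tmap id (QQ mm \<circ> \<delta>) \<circ> asr) id (asl (tmap id (QQ mm) (asl (tmap id (LD \<Delta>) (LD \<Delta> y)))))))
  ((tmap id asl \<circ> asl \<circ> tmap id (QQ mm)) (tmap id (tmap id (tmap id asr) \<circ> tmap id asr \<circ> asr \<circ> tmap (WW \<delta> \<circ> tmap id mm \<circ> LD \<Delta>) id \<circ> asl) (LD \<Delta> y)))"
  apply (rule fl_inj[OF good_fl[OF gl_C gl_M] good_fl[OF good_fl[OF gl_C gl_M] good_fl[OF gl_C gl_M]]])
  apply (simp add: fe_simps fl_def defs_all)
  apply (subst fe_swap)
  apply (rule refl)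
  done


lemma flatF: "eqm (tensor (tensor C M) (tensor (tensor C M) (tensor C M)))
  ((tmap id asl \<circ> asl \<circ> tmap id (QQ mm)) (tmap id (tmap id (tmap id asr) \<circ> tmap id asr \<circ> asr \<circ> tmap (tmap id (tmap id mm \<circ> QQ mm) \<circ> LD \<Delta> \<circ> \<delta>) id \<circ> asl) (LD \<Delta> y)))
  (asl (tmap id (tmap id (asl \<circ> tmap id (QQ mm)) \<circ> tmap id asr \<circ> asr \<circ> tmap (QQ mm \<circ> tmap id mm \<circ> LD \<Delta>) id \<circ> asl \<circ> WW \<delta>) (LD \<Delta> y)))"
  apply (rule fl_inj[OF good_fl[OF gl_C gl_M] good_fl[OF good_fl[OF gl_C gl_M] good_fl[OF gl_C gl_M]]])
  apply (simp add: fe_simps fl_def defs_all)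
  apply (subst (2) fe_swap)
  apply (rule refl)
  done


lemma LHS: "eqm (tensor (tensor C M) (tensor (tensor C M) (tensor C M)))
  (asr (tmap (cw_comult \<Delta> mm \<delta>) id (cw_comult \<Delta> mm \<delta> x)))
  ((tmap id asl \<circ> asl \<circ> tmap id (QQ mm)) (tmap id (tmap id (tmap id asr) \<circ> tmap id asr \<circ> asr \<circ> tmap (tmap id (tmap id mm \<circ> QQ mm) \<circ> LD \<Delta> \<circ> \<delta>) id \<circ> asl) (LD \<Delta> (\<delta> x))))"
  (is "eqm ?T _ _")
proof -
  let ?Z = "asl \<circ> tmap id (QQ mm \<circ> \<delta>) \<circ> asr"
  have e1: "asr (tmap (cw_comult \<Delta> mm \<delta>) id (cw_comult \<Delta> mm \<delta> x)) = asr (tmap ?Z id (asl (tmap id (QQ mm \<circ> \<delta>) (tmap \<Delta> id (LD \<Delta> x)))))"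
    by (simp add: fe_simps defs_all)
  have bK1: "bilinear (tensor (tensor C C) (tensor C M)) ?T (asr \<circ> tmap ?Z id \<circ> asl \<circ> tmap id (QQ mm \<circ> \<delta>))"
    by ((rule bil_intros bil_atoms bLD bQQ | assumption)+)
  have f2: "eqm (tensor (tensor C C) (tensor C M)) (tmap \<Delta> id (LD \<Delta> x)) (asl (LD \<Delta> (LD \<Delta> x)))"
    unfolding LD_def[of \<Delta>] comp_apply by (rule tTs[OF asl_asr])
  have l2: "eqm ?T (asr (tmap ?Z id (asl (tmap id (QQ mm \<circ> \<delta>) (tmap \<Delta> id (LD \<Delta> x)))))) (asr (tmap ?Z id (asl (tmap id (QQ mm \<circ> \<delta>) (asl (LD \<Delta> (LD \<Delta> x)))))))"
    using bil_resp[OF bK1 f2] by simp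
  have bK1': "bilinear (tensor C (tensor C (tensor C M))) ?T (asr \<circ> tmap ?Z id \<circ> asl \<circ> tmap id (QQ mm \<circ> \<delta>) \<circ> asl)"
    by ((rule bil_intros bil_atoms bLD bQQ | assumption)+)
  have l3: "eqm ?T (asr (tmap ?Z id (asl (tmap id (QQ mm \<circ> \<delta>) (asl (LD \<Delta> (LD \<Delta> x))))))) (asr (tmap ?Z id (asl (tmap id (QQ mm \<circ> \<delta>) (asl (tmap id (LD \<Delta>) (LD \<Delta> x)))))))"
    using bil_resp[OF bK1' LDLD] by simp
  have e4: "asr (tmap ?Z id (asl (tmap id (QQ mm \<circ> \<delta>) (asl (tmap id (LD \<Delta>) (LD \<Delta> x)))))) = asr (tmap ?Z id (asl (tmap id (QQ mm) (asl (tmap id (tmap id \<delta> \<circ> LD \<Delta>) (LD \<Delta> x))))))"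
    by (simp add: fe_simps)
  have bK2: "bilinear (tensor C (tensor C (tensor C (tensor M M)))) ?T (asr \<circ> tmap ?Z id \<circ> asl \<circ> tmap id (QQ mm) \<circ> asl)"
    by ((rule bil_intros bil_atoms bLD bQQ | assumption)+)
  have p5: "eqm (tensor C (tensor C (tensor M M))) ((tmap id \<delta> \<circ> LD \<Delta>) z) ((LD \<Delta> \<circ> \<delta>) z)" for z
    using h_dl by (simp add: LD_def tTs)
  have l5: "eqm ?T (asr (tmap ?Z id (asl (tmap id (QQ mm) (asl (tmap id (tmap id \<delta> \<circ> LD \<Delta>) (LD \<Delta> x))))))) (asr (tmap ?Z id (asl (tmap id (QQ mm) (asl (tmap id (LD \<Delta> \<circ> \<delta>) (LD \<Delta> x)))))))"
  proof -
    have c5: "eqm (tensor C (tensor C (tensor C (tensor M M)))) (tmap id (tmap id \<delta> \<circ> LD \<Delta>) (LD \<Delta> x)) (tmap id (LD \<Delta> \<circ> \<delta>) (LD \<Delta> x))"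
      by (rule tmap_cong2) (rule p5)
    show ?thesis using bil_resp[OF bK2 c5] by simp
  qed
  have e6: "tmap id (LD \<Delta> \<circ> \<delta>) (LD \<Delta> x) = tmap id (LD \<Delta>) (tmap id \<delta> (LD \<Delta> x))"
    by (simp add: tmap_comp)
  have bK3: "bilinear (tensor C (tensor C (tensor M M))) ?T (asr \<circ> tmap ?Z id \<circ> asl \<circ> tmap id (QQ mm) \<circ> asl \<circ> tmap id (LD \<Delta>))"
    by ((rule bil_intros bil_atoms bLD bQQ | assumption)+)
  have l7: "eqm ?T (asr (tmap ?Z id (asl (tmap id (QQ mm) (asl (tmap id (LD \<Delta>) (tmap id \<delta> (LD \<Delta> x)))))))) (asr (tmap ?Z id (asl (tmap id (QQ mm) (asl (tmap id (LD \<Delta>) (LD \<Delta> (\<delta> x))))))))"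
    using bil_resp[OF bK3 tTs[OF h_dl]] by (simp add: LD_def)
  have bF: "bilinear (tensor (tensor C (tensor M (tensor M C))) M) (tensor C (tensor M (tensor M (tensor C M)))) (tmap id (tmap id asr) \<circ> tmap id asr \<circ> asr)"
    by ((rule bil_intros bil_atoms | assumption)+)
  have p9: "eqm (tensor C (tensor M (tensor M (tensor C M))))
     ((tmap id (tmap id asr) \<circ> tmap id asr \<circ> asr \<circ> tmap (WW \<delta> \<circ> tmap id mm \<circ> LD \<Delta>) id \<circ> asl) w)
     ((tmap id (tmap id asr) \<circ> tmap id asr \<circ> asr \<circ> tmap (tmap id (tmap id mm \<circ> QQ mm) \<circ> LD \<Delta> \<circ> \<delta>) id \<circ> asl) w)" for w
    using bil_resp[OF bF tmap_cong1[of "tensor C (tensor M (tensor M C))" "WW \<delta> \<circ> tmap id mm \<circ> LD \<Delta>" "tmap id (tmap id mm \<circ> QQ mm) \<circ> LD \<Delta> \<circ> \<delta>"]] tTs[OF dr'] by simp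
  have bKL: "bilinear (tensor C (tensor C (tensor M (tensor M (tensor C M))))) ?T (tmap id asl \<circ> asl \<circ> tmap id (QQ mm))"
    by ((rule bil_intros bil_atoms bLD bQQ | assumption)+)
  have l9: "eqm ?T ((tmap id asl \<circ> asl \<circ> tmap id (QQ mm)) (tmap id (tmap id (tmap id asr) \<circ> tmap id asr \<circ> asr \<circ> tmap (WW \<delta> \<circ> tmap id mm \<circ> LD \<Delta>) id \<circ> asl) (LD \<Delta> (\<delta> x))))
     ((tmap id asl \<circ> asl \<circ> tmap id (QQ mm)) (tmap id (tmap id (tmap id asr) \<circ> tmap id asr \<circ> asr \<circ> tmap (tmap id (tmap id mm \<circ> QQ mm) \<circ> LD \<Delta> \<circ> \<delta>) id \<circ> asl) (LD \<Delta> (\<delta> x))))"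
    by (rule bil_resp[OF bKL tmap_cong2[OF p9]])
  show ?thesis unfolding e1
    using tTr[OF l2 tTr[OF l3 tTr[OF l5[folded e4] tTr[OF l7[folded e6] tTr[OF flatL l9]]]]] .
qed

theorem coass: "eqm (tensor (tensor C M) (tensor (tensor C M) (tensor C M)))
  (asr (tmap (cw_comult \<Delta> mm \<delta>) id (cw_comult \<Delta> mm \<delta> x)))
  (tmap id (cw_comult \<Delta> mm \<delta>) (cw_comult \<Delta> mm \<delta> x))"
  using tTr[OF LHS tTr[OF flatF tTs[OF RHS]]] .

end

lemma tensor_is_bimod:
  assumes iB: "is_bimod B" and iD: "is_bimod D"
  shows "is_bimod (tensor B D)"
proof -
  note gB = grp_bimod[OF iB] and gD = grp_bimod[OF iD]
  have l_eq: "bm_l (tensor B D) a = tmap (bm_l B a) id" for a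
    by (rule ext) (simp add: tmap_def)
  have r_eq: "bm_r (tensor B D) a = tmap id (bm_r D a)" for a
    by (rule ext) (simp add: tmap_def)
  have idl: "llin D D id" by (simp add: llin_def resp_def addm_def eqm_refl[OF gD])
  have idr: "rlin B B id" by (simp add: rlin_def resp_def addm_def eqm_refl[OF gB])
  have lB: "rlin B B (bm_l B a)" for a
    using ib_l_resp[OF iB] ib_l_add[OF iB] ib_lr[OF iB] by (simp add: rlin_def resp_def addm_def)
  have rD: "llin D D (bm_r D a)" for a
    using ib_r_resp[OF iD] ib_r_add[OF iD] eqm_sym[OF gD ib_lr[OF iD]] by (simp add: llin_def resp_def addm_def)
  have c4: "eqm (tensor B D) u v \<longrightarrow> eqm (tensor B D) (bm_l (tensor B D) a u) (bm_l (tensor B D) a v)" for a u v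
    using tmap_resp[OF gB gD lB idl] unfolding l_eq resp_def by blast
  have c5: "eqm (tensor B D) u v \<longrightarrow> eqm (tensor B D) (bm_r (tensor B D) a u) (bm_r (tensor B D) a v)" for a u v
    using tmap_resp[OF gB gD idr rD] unfolding r_eq resp_def by blast
  have c6: "eqm (tensor B D) (bm_l (tensor B D) a (u + v)) (bm_l (tensor B D) a u + bm_l (tensor B D) a v)" for a u v
    by (simp add: frag_extend_add tT(3))
  have c7: "eqm (tensor B D) (bm_l (tensor B D) (a + b) u) (bm_l (tensor B D) a u + bm_l (tensor B D) b u)" for a b u
  proof -
    have "eqm (tensor B D) (frag_extend (\<lambda>(x, y). frag_of (bm_l B (a + b) x, y)) u)
      (frag_extend (\<lambda>k. (\<lambda>(x, y). frag_of (bm_l B a x, y)) k + (\<lambda>(x, y). frag_of (bm_l B b x, y)) k) u)"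
    proof (rule eqm_fe; clarsimp)
      fix x y
      show "eqm (tensor B D) (frag_of (bm_l B (a + b) x, y)) (frag_of (bm_l B a x, y) + frag_of (bm_l B b x, y))"
        using tT(1)[OF s1_eq[OF ib_l_add2[OF iB]] r_add1] .
    qed
    then show ?thesis by (simp only: tensor_sel fe_plus_fun)
  qed
  have c8: "eqm (tensor B D) (bm_l (tensor B D) (a * b) u) (bm_l (tensor B D) a (bm_l (tensor B D) b u))" for a b u
    by (simp add: fe_fe case_prod_unfold) (intro eqm_fe s1_eq ib_l_mult[OF iB])
  have c9: "eqm (tensor B D) (bm_l (tensor B D) 1 u) u"
    for u
  proof -
    have "eqm (tensor B D) (frag_extend (\<lambda>(x, y). frag_of (bm_l B 1 x, y)) u) (frag_extend frag_of u)"
      by (rule eqm_fe) (auto intro: s1_eq ib_l_one[OF iB])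
    then show ?thesis by simp
  qed
  have c10: "eqm (tensor B D) (bm_r (tensor B D) a (u + v)) (bm_r (tensor B D) a u + bm_r (tensor B D) a v)" for a u v
    by (simp add: frag_extend_add tT(3))
  have c11: "eqm (tensor B D) (bm_r (tensor B D) (a + b) u) (bm_r (tensor B D) a u + bm_r (tensor B D) b u)" for a b u
  proof -
    have "eqm (tensor B D) (frag_extend (\<lambda>(x, y). frag_of (x, bm_r D (a + b) y)) u)
      (frag_extend (\<lambda>k. (\<lambda>(x, y). frag_of (x, bm_r D a y)) k + (\<lambda>(x, y). frag_of (x, bm_r D b y)) k) u)"
    proof (rule eqm_fe; clarsimp)
      fix x y
      show "eqm (tensor B D) (frag_of (x, bm_r D (a + b) y)) (frag_of (x, bm_r D a y) + frag_of (x, bm_r D b y))"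
        using tT(1)[OF s2_eq[OF ib_r_add2[OF iD]] r_add2] .
    qed
    then show ?thesis by (simp only: tensor_sel fe_plus_fun)
  qed
  have c12: "eqm (tensor B D) (bm_r (tensor B D) (a * b) u) (bm_r (tensor B D) b (bm_r (tensor B D) a u))" for a b u
    by (simp add: fe_fe case_prod_unfold) (intro eqm_fe s2_eq ib_r_mult[OF iD])
  have c13: "eqm (tensor B D) (bm_r (tensor B D) 1 u) u"
    for u
  proof -
    have "eqm (tensor B D) (frag_extend (\<lambda>(x, y). frag_of (x, bm_r D 1 y)) u) (frag_extend frag_of u)"
      by (rule eqm_fe) (auto intro: s2_eq ib_r_one[OF iD])
    then show ?thesis by simp
  qed
  have c14: "eqm (tensor B D) (bm_l (tensor B D) a (bm_r (tensor B D) b u)) (bm_r (tensor B D) b (bm_l (tensor B D) a u))" for a b u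
    by (simp add: fe_fe case_prod_unfold tT(3))
  show ?thesis unfolding is_bimod_def
    using c4 c5 c6 c7 c8 c9 c10 c11 c12 c13 c14
    by (simp add: zspan.zspan_0 zspan_plus zspan_uminus)
qed

context cw begin

theorem main: "is_coring (tensor C M) (cw_comult \<Delta> mm \<delta>) (\<epsilon> \<circ> \<xi>)
    \<and> coring_morph (tensor C M) C \<xi> (cw_comult \<Delta> mm \<delta>) (\<epsilon> \<circ> \<xi>) \<Delta> \<epsilon>"
proof -
  have b: "bilinear (tensor C M) ring_bimod (\<epsilon> \<circ> \<xi>)"
    by ((rule bil_intros bil_atoms | assumption)+)
  show ?thesis
    unfolding is_coring_def coring_morph_def mapeq_def
    using tensor_is_bimod[OF ibC ibM] bD' b coass lcounit rcounit bxi morph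
    by simp
qed

end

theorem proposition3p3:
  fixes C :: "('a::ring_1, 'c::ab_group_add) bimod"
    and M :: "('a, 'm::ab_group_add) bimod"
    and \<Delta> :: "'c \<Rightarrow> ('c \<times> 'c \<Rightarrow>\<^sub>0 int)"
    and \<epsilon> :: "'c \<Rightarrow> 'a"
    and mm :: "('c \<times> 'm \<Rightarrow>\<^sub>0 int) \<Rightarrow> ('m \<times> 'c \<Rightarrow>\<^sub>0 int)"
    and \<xi> :: "('c \<times> 'm \<Rightarrow>\<^sub>0 int) \<Rightarrow> 'c"
    and \<delta> :: "('c \<times> 'm \<Rightarrow>\<^sub>0 int) \<Rightarrow> ('c \<times> ('m \<times> 'm \<Rightarrow>\<^sub>0 int) \<Rightarrow>\<^sub>0 int)"
  assumes "is_coring C \<Delta> \<epsilon>"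
    and "is_cowreath C \<Delta> \<epsilon> M mm \<xi> \<delta>"
  shows "is_coring (tensor C M) (cw_comult \<Delta> mm \<delta>) (\<epsilon> \<circ> \<xi>)
    \<and> coring_morph (tensor C M) C \<xi> (cw_comult \<Delta> mm \<delta>) (\<epsilon> \<circ> \<xi>) \<Delta> \<epsilon>"
proof -
  interpret cw C M \<Delta> \<epsilon> mm \<xi> \<delta> using assms by unfold_locales
  show ?thesis by (rule main)
qed

end
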